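(* Let $R$ be a local ring and $s\in R$ a central element. Then $A\in M_2(R;s)$ is strongly $J$-clean if and only if one of the following holds: (1) $A\in J\big(M_2(R;s)\big)$; (2) $I_2-A\in J\big(M_2(R;s)\big)$; (3) $s\in U(R)$ and $A$ is similar to $\left[\begin{smallmatrix} v&0\\ 0&w\end{smallmatrix}\right]$ for some $v\in 1+J(R)$, $w\in J(R)$; (4) $s\in J(R)$ and $A$ is similar to $\left[\begin{smallmatrix} v&0\\ 0&w\end{smallmatrix}\right]$ or to $\left[\begin{smallmatrix} w&0\\ 0&v\end{smallmatrix}\right]$ for some $v\in 1+J(R)$, $w\in J(R)$.
   Context: All rings are associative with identity. A ring $R$ is local if $R/J(R)$ is a division ring, where $J(R)$ is the Jacobson radical; $U(R)$ is the group of units. For a ring $R$ and a central element $s\in R$, $M_2(R;s)$ denotes the ring whose elements are the $2\times 2$ arrays $\left[\begin{smallmatrix} a&b\\ c&d\end{smallmatrix}\right]$ with $a,b,c,d\in R$, with componentwise addition and multiplication $\left[\begin{smallmatrix} a&b\\ c&d\end{smallmatrix}\right]\left[\begin{smallmatrix} a'&b'\\ c'&d'\end{smallmatrix}\right]=\left[\begin{smallmatrix} aa'+s^2bc'&ab'+bd'\\ ca'+dc'&s^2cb'+dd'\end{smallmatrix}\right]$, with identity $I_2$. Two elements $A,B\in M_2(R;s)$ are similar if $B=P^{-1}AP$ for some unit $P$ of $M_2(R;s)$. An element $a$ of a ring $T$ is strongly $J$-clean if there is an idempotent $e\in T$ with $ae=ea$ and $a-e\in J(T)$. *)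

theory Defs
  imports "HOL-Algebra.QuotRing"
begin

definition left_ideal :: "'a set \<Rightarrow> ('a, 'b) ring_scheme \<Rightarrow> bool" where
  "left_ideal I R \<longleftrightarrow> additive_subgroup I R \<and>
     (\<forall>r \<in> carrier R. \<forall>x \<in> I. r \<otimes>\<^bsub>R\<^esub> x \<in> I)"

definition maximal_left_ideal :: "'a set \<Rightarrow> ('a, 'b) ring_scheme \<Rightarrow> bool" where
  "maximal_left_ideal I R \<longleftrightarrow> left_ideal I R \<and> I \<noteq> carrier R \<and>
     (\<forall>K. left_ideal K R \<and> I \<subseteq> K \<and> K \<noteq> carrier R \<longrightarrow> K = I)"

definition jacobson :: "('a, 'b) ring_scheme \<Rightarrow> 'a set" where
  "jacobson R = carrier R \<inter> \<Inter> {I. maximal_left_ideal I R}"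

definition division_ring :: "('a, 'b) ring_scheme \<Rightarrow> bool" where
  "division_ring D \<longleftrightarrow> ring D \<and> \<one>\<^bsub>D\<^esub> \<noteq> \<zero>\<^bsub>D\<^esub> \<and>
     carrier D - {\<zero>\<^bsub>D\<^esub>} \<subseteq> Units D"

definition local_ring :: "('a, 'b) ring_scheme \<Rightarrow> bool" where
  "local_ring R \<longleftrightarrow> ring R \<and> division_ring (R Quot jacobson R)"

definition central :: "('a, 'b) ring_scheme \<Rightarrow> 'a \<Rightarrow> bool" where
  "central R s \<longleftrightarrow> s \<in> carrier R \<and> (\<forall>x \<in> carrier R. s \<otimes>\<^bsub>R\<^esub> x = x \<otimes>\<^bsub>R\<^esub> s)"

text \<open>The generalized matrix ring M_2(R;s); an array [[a,b],[c,d]] is the tuple (a,b,c,d).\<close>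
definition M2s :: "('a, 'b) ring_scheme \<Rightarrow> 'a \<Rightarrow> ('a \<times> 'a \<times> 'a \<times> 'a) ring" where
  "M2s R s = \<lparr> carrier = carrier R \<times> carrier R \<times> carrier R \<times> carrier R,
     mult = (\<lambda>(a, b, c, d) (a', b', c', d').
        (a \<otimes>\<^bsub>R\<^esub> a' \<oplus>\<^bsub>R\<^esub> (s \<otimes>\<^bsub>R\<^esub> s) \<otimes>\<^bsub>R\<^esub> b \<otimes>\<^bsub>R\<^esub> c',
         a \<otimes>\<^bsub>R\<^esub> b' \<oplus>\<^bsub>R\<^esub> b \<otimes>\<^bsub>R\<^esub> d',
         c \<otimes>\<^bsub>R\<^esub> a' \<oplus>\<^bsub>R\<^esub> d \<otimes>\<^bsub>R\<^esub> c',
         (s \<otimes>\<^bsub>R\<^esub> s) \<otimes>\<^bsub>R\<^esub> c \<otimes>\<^bsub>R\<^esub> b' \<oplus>\<^bsub>R\<^esub> d \<otimes>\<^bsub>R\<^esub> d')),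
     one = (\<one>\<^bsub>R\<^esub>, \<zero>\<^bsub>R\<^esub>, \<zero>\<^bsub>R\<^esub>, \<one>\<^bsub>R\<^esub>),
     zero = (\<zero>\<^bsub>R\<^esub>, \<zero>\<^bsub>R\<^esub>, \<zero>\<^bsub>R\<^esub>, \<zero>\<^bsub>R\<^esub>),
     add = (\<lambda>(a, b, c, d) (a', b', c', d').
        (a \<oplus>\<^bsub>R\<^esub> a', b \<oplus>\<^bsub>R\<^esub> b', c \<oplus>\<^bsub>R\<^esub> c', d \<oplus>\<^bsub>R\<^esub> d')) \<rparr>"

definition similar :: "('a, 'b) ring_scheme \<Rightarrow> 'a \<Rightarrow> 'a \<Rightarrow> bool" where
  "similar T A B \<longleftrightarrow> (\<exists>P \<in> Units T. B = inv\<^bsub>T\<^esub> P \<otimes>\<^bsub>T\<^esub> A \<otimes>\<^bsub>T\<^esub> P)"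

definition strongly_J_clean :: "('a, 'b) ring_scheme \<Rightarrow> 'a \<Rightarrow> bool" where
  "strongly_J_clean T a \<longleftrightarrow> (\<exists>e \<in> carrier T. e \<otimes>\<^bsub>T\<^esub> e = e \<and>
      a \<otimes>\<^bsub>T\<^esub> e = e \<otimes>\<^bsub>T\<^esub> a \<and> a \<ominus>\<^bsub>T\<^esub> e \<in> jacobson T)"

end

theory Submission
  imports Defs
begin

lemma (in ring) addsubI:
  assumes "H \<subseteq> carrier R" "\<zero> \<in> H" "\<And>x y. x \<in> H \<Longrightarrow> y \<in> H \<Longrightarrow> x \<oplus> y \<in> H"
    "\<And>x. x \<in> H \<Longrightarrow> \<ominus> x \<in> H"
  shows "additive_subgroup H R"
  using assms by (auto simp: additive_subgroup_def subgroup_def a_inv_def[symmetric])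

lemma (in ring) mli_J:
  assumes "maximal_left_ideal M R"
  shows "additive_subgroup M R" "\<And>r x. r \<in> carrier R \<Longrightarrow> x \<in> M \<Longrightarrow> r \<otimes> x \<in> M" "M \<noteq> carrier R"
  using assms by (auto simp: maximal_left_ideal_def left_ideal_def)

lemma (in ring) J_carrier: "jacobson R \<subseteq> carrier R"
  by (auto simp: jacobson_def)

lemma (in ring) J_zero: "\<zero> \<in> jacobson R"
  by (auto simp: jacobson_def dest: mli_J(1) additive_subgroup.zero_closed)

lemma (in ring) J_add: "x \<in> jacobson R \<Longrightarrow> y \<in> jacobson R \<Longrightarrow> x \<oplus> y \<in> jacobson R"
  by (auto simp: jacobson_def dest: mli_J(1) additive_subgroup.a_closed)

lemma (in ring) J_neg: "x \<in> jacobson R \<Longrightarrow> \<ominus> x \<in> jacobson R"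
  by (auto simp: jacobson_def dest: mli_J(1) additive_subgroup.a_inv_closed)

lemma (in ring) J_lmult: "r \<in> carrier R \<Longrightarrow> x \<in> jacobson R \<Longrightarrow> r \<otimes> x \<in> jacobson R"
  by (auto simp: jacobson_def dest: mli_J(2))

lemma (in ring) J_minus: "x \<in> jacobson R \<Longrightarrow> y \<in> jacobson R \<Longrightarrow> x \<ominus> y \<in> jacobson R"
  by (simp add: a_minus_def J_add J_neg)

lemma (in ring) left_ideal_one:
  assumes "left_ideal K R" "\<one> \<in> K" shows "K = carrier R"
proof -
  have "additive_subgroup K R" using assms by (simp add: left_ideal_def)
  hence "K \<subseteq> carrier R" by (rule additive_subgroup.a_subset)
  moreover have "r \<in> K" if "r \<in> carrier R" for r
    using assms that unfolding left_ideal_def by (metis r_one)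
  ultimately show ?thesis by blast
qed

lemma (in ring) zorn_mli:
  assumes "left_ideal I R" "\<one> \<notin> I"
  shows "\<exists>M. maximal_left_ideal M R \<and> I \<subseteq> M"
proof -
  let ?A = "{K. left_ideal K R \<and> I \<subseteq> K \<and> \<one> \<notin> K}"
  have ne: "?A \<noteq> {}" using assms by blast
  have ch: "\<Union>C \<in> ?A" if cne: "C \<noteq> {}" and cch: "subset.chain ?A C" for C
  proof -
    have CA: "C \<subseteq> ?A" and lin: "\<And>X Y. X \<in> C \<Longrightarrow> Y \<in> C \<Longrightarrow> X \<subseteq> Y \<or> Y \<subseteq> X"
      using cch by (auto simp: subset.chain_def)
    obtain K0 where K0: "K0 \<in> C" using cne by blast
    have ag: "\<And>Z. Z \<in> C \<Longrightarrow> additive_subgroup Z R" using CA by (simp add: left_ideal_def subset_iff)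
    have lz: "\<And>Z r z. Z \<in> C \<Longrightarrow> r \<in> carrier R \<Longrightarrow> z \<in> Z \<Longrightarrow> r \<otimes> z \<in> Z"
      using CA by (simp add: left_ideal_def subset_iff)
    have sub: "\<Union>C \<subseteq> carrier R"
      using ag additive_subgroup.a_subset by blast
    have z: "\<zero> \<in> \<Union>C" using K0 ag additive_subgroup.zero_closed by blast
    have add: "x \<oplus> y \<in> \<Union>C" if xy: "x \<in> \<Union>C" "y \<in> \<Union>C" for x y
    proof -
      obtain X Y where XY: "X \<in> C" "Y \<in> C" "x \<in> X" "y \<in> Y" using xy by blast
      from lin[OF XY(1,2)] show ?thesis
      proof
        assume "X \<subseteq> Y"
        then have "x \<oplus> y \<in> Y" using additive_subgroup.a_closed[OF ag[OF XY(2)]] XY by blast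
        then show ?thesis using XY by blast
      next
        assume "Y \<subseteq> X"
        then have "x \<oplus> y \<in> X" using additive_subgroup.a_closed[OF ag[OF XY(1)]] XY by blast
        then show ?thesis using XY by blast
      qed
    qed
    have neg: "\<ominus> x \<in> \<Union>C" if xx: "x \<in> \<Union>C" for x
    proof -
      obtain X where X: "X \<in> C" "x \<in> X" using xx by blast
      then have "\<ominus> x \<in> X" using additive_subgroup.a_inv_closed[OF ag[OF X(1)]] by blast
      then show ?thesis using X by blast
    qed
    have lm: "r \<otimes> x \<in> \<Union>C" if rx: "r \<in> carrier R" "x \<in> \<Union>C" for r x
    proof -
      obtain X where X: "X \<in> C" "x \<in> X" using rx by blast
      then have "r \<otimes> x \<in> X" using lz rx by blast
      then show ?thesis using X by blast
    qed
    have "left_ideal (\<Union>C) R"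
      unfolding left_ideal_def using addsubI[OF sub z add neg] lm by blast
    moreover have "I \<subseteq> \<Union>C" using K0 CA by blast
    moreover have "\<one> \<notin> \<Union>C" using CA by blast
    ultimately show ?thesis by blast
  qed
  from subset_Zorn_nonempty[OF ne ch] obtain M where M1: "M \<in> ?A" and M2: "\<forall>X\<in>?A. M \<subseteq> X \<longrightarrow> X = M" ..
  have Mli: "left_ideal M R" and MI: "I \<subseteq> M" and M1n: "\<one> \<notin> M" using M1 by simp_all
  have "maximal_left_ideal M R"
    unfolding maximal_left_ideal_def
  proof (intro conjI allI impI)
    show "left_ideal M R" by (rule Mli)
    show "M \<noteq> carrier R" using M1n one_closed by metis
    fix K assume K: "left_ideal K R \<and> M \<subseteq> K \<and> K \<noteq> carrier R"
    have K1: "\<one> \<notin> K"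
    proof
      assume "\<one> \<in> K"
      then have "K = carrier R" using K left_ideal_one[of K] by simp
      then show False using K by simp
    qed
    have "I \<subseteq> K" using MI K by (meson order_trans)
    then have "K \<in> ?A" using K K1 by simp
    then show "K = M" using M2 K by simp
  qed
  then show ?thesis using MI by blast
qed

lemma (in ring) J_leftinv:
  assumes x: "x \<in> jacobson R"
  shows "\<exists>w \<in> carrier R. w \<otimes> (\<one> \<ominus> x) = \<one>"
proof (rule ccontr)
  assume nex: "\<not> ?thesis"
  have xc: "x \<in> carrier R" using x J_carrier by blast
  let ?I = "{y \<otimes> (\<one> \<ominus> x) | y. y \<in> carrier R}"
  have zc: "\<one> \<ominus> x \<in> carrier R" using xc by simp
  have li: "left_ideal ?I R"
    unfolding left_ideal_def
  proof (intro conjI ballI)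
    show "additive_subgroup ?I R"
    proof (rule addsubI)
      show "?I \<subseteq> carrier R" using zc by auto
      show "\<zero> \<in> ?I" using zc by (auto intro!: exI[of _ \<zero>])
      fix a b assume "a \<in> ?I" "b \<in> ?I"
      then obtain ya yb where "a = ya \<otimes> (\<one> \<ominus> x)" "b = yb \<otimes> (\<one> \<ominus> x)" "ya \<in> carrier R" "yb \<in> carrier R" by blast
      then show "a \<oplus> b \<in> ?I" using zc by (auto intro!: exI[of _ "ya \<oplus> yb"] simp: l_distr)
    next
      fix a assume "a \<in> ?I"
      then obtain ya where "a = ya \<otimes> (\<one> \<ominus> x)" "ya \<in> carrier R" by blast
      then show "\<ominus> a \<in> ?I" using zc by (auto intro!: exI[of _ "\<ominus> ya"] simp: l_minus)
    qed
    fix r a assume "r \<in> carrier R" "a \<in> ?I"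
    then obtain ya where "a = ya \<otimes> (\<one> \<ominus> x)" "ya \<in> carrier R" by blast
    then show "r \<otimes> a \<in> ?I" using zc \<open>r \<in> carrier R\<close> by (auto intro!: exI[of _ "r \<otimes> ya"] simp: m_assoc)
  qed
  have "\<one> \<notin> ?I" using nex by auto
  then obtain M where M: "maximal_left_ideal M R" "?I \<subseteq> M" using zorn_mli li by blast
  have "\<one> \<otimes> (\<one> \<ominus> x) \<in> ?I" by blast
  hence "\<one> \<otimes> (\<one> \<ominus> x) \<in> M" using M(2) by (rule subsetD[rotated])
  hence "\<one> \<ominus> x \<in> M" using zc by (simp only: l_one)
  moreover have "x \<in> M" using x M by (auto simp: jacobson_def)
  ultimately have "(\<one> \<ominus> x) \<oplus> x \<in> M" by (rule additive_subgroup.a_closed[OF mli_J(1)[OF M(1)]])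
  moreover have "(\<one> \<ominus> x) \<oplus> x = \<one>" using xc by (simp add: a_minus_def a_assoc l_neg)
  ultimately have "\<one> \<in> M" by simp
  moreover have "left_ideal M R" using M(1) by (simp add: maximal_left_ideal_def)
  ultimately have "M = carrier R" by (intro left_ideal_one)
  then show False using mli_J(3)[OF M(1)] by blast
qed

lemma (in ring) J_crit:
  assumes x: "x \<in> carrier R"
    and h: "\<And>y. y \<in> carrier R \<Longrightarrow> \<exists>w\<in>carrier R. w \<otimes> (\<one> \<ominus> y \<otimes> x) = \<one>"
  shows "x \<in> jacobson R"
  unfolding jacobson_def
proof (intro IntI x InterI, clarify)
  fix M assume M: "maximal_left_ideal M R"
  have Ms: "M \<subseteq> carrier R" using additive_subgroup.a_subset[OF mli_J(1)[OF M]] .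
  have Mas: "additive_subgroup M R" using mli_J(1)[OF M] .
  show "x \<in> M"
  proof (rule ccontr)
    assume nx: "x \<notin> M"
    let ?K = "{m \<oplus> y \<otimes> x | m y. m \<in> M \<and> y \<in> carrier R}"
    have li: "left_ideal ?K R"
      unfolding left_ideal_def
    proof (intro conjI ballI)
      show "additive_subgroup ?K R"
      proof (rule addsubI)
        show "?K \<subseteq> carrier R"
        proof
          fix k assume "k \<in> ?K"
          then obtain m y where my: "k = m \<oplus> y \<otimes> x" "m \<in> M" "y \<in> carrier R" by blast
          have "m \<in> carrier R" using my(2) Ms by blast
          then show "k \<in> carrier R" using my x by simp
        qed
        have "\<zero> \<in> M" using additive_subgroup.zero_closed[OF Mas] .
        moreover have "\<zero> = \<zero> \<oplus> \<zero> \<otimes> x" using x by simp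
        ultimately show "\<zero> \<in> ?K" by blast
        fix a b assume "a \<in> ?K" "b \<in> ?K"
        then obtain ma ya mb yb where ab: "a = ma \<oplus> ya \<otimes> x" "b = mb \<oplus> yb \<otimes> x" "ya \<in> carrier R" "yb \<in> carrier R"
          "ma \<in> M" "mb \<in> M" by blast
        have mab: "ma \<in> carrier R" "mb \<in> carrier R" using ab Ms by blast+
        have "a \<oplus> b = (ma \<oplus> mb) \<oplus> (ya \<oplus> yb) \<otimes> x"
          using ab mab x by (simp add: l_distr a_ac)
        moreover have "ma \<oplus> mb \<in> M" using additive_subgroup.a_closed[OF Mas] ab(5,6) by blast
        ultimately show "a \<oplus> b \<in> ?K" using ab by blast
      next
        fix a assume "a \<in> ?K"
        then obtain ma ya where ab: "a = ma \<oplus> ya \<otimes> x" "ya \<in> carrier R" "ma \<in> M" by blast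
        have mab: "ma \<in> carrier R" using ab Ms by blast
        have "\<ominus> a = (\<ominus> ma) \<oplus> (\<ominus> ya) \<otimes> x"
          using ab mab x by (simp add: l_minus minus_add)
        moreover have "\<ominus> ma \<in> M" using additive_subgroup.a_inv_closed[OF Mas] ab(3) by blast
        ultimately show "\<ominus> a \<in> ?K" using ab by blast
      qed
      fix r a assume r: "r \<in> carrier R" and "a \<in> ?K"
      then obtain ma ya where ab: "a = ma \<oplus> ya \<otimes> x" "ya \<in> carrier R" "ma \<in> M" by blast
      have mab: "ma \<in> carrier R" using ab Ms by blast
      have "r \<otimes> a = r \<otimes> ma \<oplus> (r \<otimes> ya) \<otimes> x"
        using ab mab x r by (simp add: r_distr m_assoc)
      moreover have "r \<otimes> ma \<in> M" using ab mli_J(2)[OF M] r by blast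
      ultimately show "r \<otimes> a \<in> ?K" using ab r by blast
    qed
    have "m \<in> ?K" if mM: "m \<in> M" for m
    proof -
      have "m \<in> carrier R" using mM Ms by blast
      then have "m = m \<oplus> \<zero> \<otimes> x" using x by simp
      then show ?thesis using mM by blast
    qed
    hence MK: "M \<subseteq> ?K" by blast
    have "\<zero> \<in> M" using additive_subgroup.zero_closed[OF Mas] .
    hence "\<zero> \<oplus> \<one> \<otimes> x \<in> ?K" by blast
    hence "x \<in> ?K" using x by simp
    hence neq: "?K \<noteq> M" using nx by blast
    have maxM: "\<forall>K. left_ideal K R \<and> M \<subseteq> K \<and> K \<noteq> carrier R \<longrightarrow> K = M"
      using M by (simp add: maximal_left_ideal_def)
    have "?K = carrier R"
    proof (rule ccontr)
      assume "?K \<noteq> carrier R"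
      then have "?K = M" using maxM li MK by blast
      then show False using neq by blast
    qed
    then have "\<one> \<in> ?K" using one_closed by simp
    then obtain m y where my: "\<one> = m \<oplus> y \<otimes> x" "m \<in> M" "y \<in> carrier R" by blast
    have mc: "m \<in> carrier R" using my Ms by blast
    have "\<one> \<ominus> y \<otimes> x = m" using my(1) mc my(3) x by (simp add: a_minus_def a_assoc r_neg)
    then obtain w where w: "w \<in> carrier R" "w \<otimes> m = \<one>" using h[OF my(3)] by auto
    have "w \<otimes> m \<in> M" using mli_J(2)[OF M w(1) my(2)] .
    hence "\<one> \<in> M" using w(2) by simp
    moreover have "left_ideal M R" using M by (simp add: maximal_left_ideal_def)
    ultimately have "M = carrier R" by (intro left_ideal_one)
    then show False using mli_J(3)[OF M] by blast
  qed
qed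

lemma (in ring) J_rmult:
  assumes x: "x \<in> jacobson R" and r: "r \<in> carrier R"
  shows "x \<otimes> r \<in> jacobson R"
proof -
  have xc: "x \<in> carrier R" using x J_carrier by blast
  show ?thesis
  proof (rule J_crit)
    show "x \<otimes> r \<in> carrier R" using xc r by simp
    fix y assume y: "y \<in> carrier R"
    define a where "a = y \<otimes> x"
    have ac: "a \<in> carrier R" using y xc a_def by simp
    have "(r \<otimes> y) \<otimes> x \<in> jacobson R" using J_lmult x r y by simp
    then obtain w0 where w0: "w0 \<in> carrier R" "w0 \<otimes> (\<one> \<ominus> (r \<otimes> y) \<otimes> x) = \<one>"
      using J_leftinv by blast
    have w0': "w0 \<otimes> (\<one> \<ominus> r \<otimes> a) = \<one>" using w0 by (simp add: a_def m_assoc r y xc)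
    have "a \<otimes> w0 \<otimes> r \<otimes> (\<one> \<ominus> a \<otimes> r) = a \<otimes> ((w0 \<otimes> (\<one> \<ominus> r \<otimes> a)) \<otimes> r)"
      using ac w0 r by (simp add: m_assoc a_minus_def r_distr l_distr r_minus l_minus)
    also have "\<dots> = a \<otimes> r" using w0' r by simp
    finally have e1: "a \<otimes> w0 \<otimes> r \<otimes> (\<one> \<ominus> a \<otimes> r) = a \<otimes> r" .
    have "(\<one> \<oplus> a \<otimes> w0 \<otimes> r) \<otimes> (\<one> \<ominus> a \<otimes> r) = (\<one> \<ominus> a \<otimes> r) \<oplus> a \<otimes> w0 \<otimes> r \<otimes> (\<one> \<ominus> a \<otimes> r)"
      using ac w0 r by (simp add: l_distr)
    also have "\<dots> = \<one>" using e1 ac r by (simp add: a_minus_def a_assoc l_neg)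
    finally have "(\<one> \<oplus> a \<otimes> w0 \<otimes> r) \<otimes> (\<one> \<ominus> y \<otimes> (x \<otimes> r)) = \<one>"
      by (simp add: a_def m_assoc y xc r)
    moreover have "\<one> \<oplus> a \<otimes> w0 \<otimes> r \<in> carrier R" using ac w0 r by simp
    ultimately show "\<exists>w\<in>carrier R. w \<otimes> (\<one> \<ominus> y \<otimes> (x \<otimes> r)) = \<one>" by blast
  qed
qed

lemma (in ring) J_unit:
  assumes x: "x \<in> jacobson R"
  shows "\<one> \<ominus> x \<in> Units R"
proof -
  have xc: "x \<in> carrier R" using x J_carrier by blast
  obtain w where w: "w \<in> carrier R" "w \<otimes> (\<one> \<ominus> x) = \<one>" using J_leftinv x by blast
  have "w = w \<otimes> ((\<one> \<ominus> x) \<oplus> x)" using xc w by (simp add: a_minus_def a_assoc l_neg)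
  also have "\<dots> = \<one> \<oplus> w \<otimes> x" using xc w by (simp add: r_distr)
  also have "\<dots> = \<one> \<ominus> (\<ominus> (w \<otimes> x))" using xc w by (simp add: a_minus_def)
  finally have weq: "w = \<one> \<ominus> (\<ominus> (w \<otimes> x))" .
  have "\<ominus> (w \<otimes> x) \<in> jacobson R" using J_neg J_lmult w x by blast
  then obtain w' where w': "w' \<in> carrier R" "w' \<otimes> w = \<one>" using J_leftinv weq by metis
  have "w' = w' \<otimes> (w \<otimes> (\<one> \<ominus> x))" using w w' by simp
  also have "\<dots> = (w' \<otimes> w) \<otimes> (\<one> \<ominus> x)" using w(1) w'(1) xc by (intro m_assoc[symmetric]) simp_all
  also have "\<dots> = \<one> \<ominus> x" using w' xc by simp
  finally have "(\<one> \<ominus> x) \<otimes> w = \<one>" using w' by simp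
  then show ?thesis using w xc unfolding Units_def by auto
qed

lemma (in ring) J_idem:
  assumes e: "e \<in> jacobson R" and ee: "e \<otimes> e = e"
  shows "e = \<zero>"
proof -
  have ec: "e \<in> carrier R" using e J_carrier by blast
  obtain w where w: "w \<in> carrier R" "w \<otimes> (\<one> \<ominus> e) = \<one>" using J_leftinv e by blast
  have "e = (w \<otimes> (\<one> \<ominus> e)) \<otimes> e" using w ec by simp
  also have "\<dots> = w \<otimes> ((\<one> \<ominus> e) \<otimes> e)" using w(1) ec by (intro m_assoc) simp_all
  also have "\<dots> = w \<otimes> (e \<ominus> e \<otimes> e)" using w ec by (simp add: a_minus_def l_distr l_minus)
  also have "\<dots> = \<zero>" using ee w ec by (simp add: a_minus_def r_neg)
  finally show ?thesis .
qed


lemma (in ring) units_of_prod: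
  assumes x: "x \<in> carrier R" and y: "y \<in> carrier R"
    and xy: "x \<otimes> y \<in> Units R" and yx: "y \<otimes> x \<in> Units R"
  shows "x \<in> Units R"
proof -
  define z where "z = y \<otimes> inv (x \<otimes> y)"
  define l where "l = inv (y \<otimes> x) \<otimes> y"
  have zc: "z \<in> carrier R" using z_def y xy by simp
  have lc: "l \<in> carrier R" using l_def y yx by simp
  have xz: "x \<otimes> z = \<one>" using z_def x y xy by (simp add: m_assoc[symmetric])
  have lx: "l \<otimes> x = \<one>" using l_def x y yx by (simp add: m_assoc)
  have "l = z" using inv_unique[OF lx xz x lc zc] .
  then show ?thesis using xz lx x zc unfolding Units_def by auto
qed

locale localR = ring +
  assumes loc: "local_ring R"
begin

abbreviation "JR \<equiv> jacobson R"

lemma J_one_notin: "\<one> \<notin> JR"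
proof
  assume o: "\<one> \<in> JR"
  have dr: "division_ring (R Quot JR)" using loc by (simp add: local_ring_def)
  have "JR +> \<one> = JR"
  proof
    show "JR +> \<one> \<subseteq> JR"
      unfolding a_r_coset_def' using o J_add by blast
    show "JR \<subseteq> JR +> \<one>"
    proof
      fix j assume j: "j \<in> JR"
      have jc: "j \<in> carrier R" using j J_carrier by blast
      have "j = (j \<ominus> \<one>) \<oplus> \<one>" using jc by (simp add: a_minus_def a_assoc l_neg)
      moreover have "j \<ominus> \<one> \<in> JR" using j o J_minus by blast
      ultimately show "j \<in> JR +> \<one>" unfolding a_r_coset_def' by blast
    qed
  qed
  then show False using dr by (simp add: division_ring_def FactRing_def)
qed

lemma J_not_unit: "x \<in> JR \<Longrightarrow> x \<notin> Units R"
proof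
  assume x: "x \<in> JR" and u: "x \<in> Units R"
  have "inv x \<otimes> x \<in> JR" using u x by (intro J_lmult) simp_all
  then show False using u J_one_notin by simp
qed

lemma coset_prod:
  assumes x: "x \<in> carrier R" and y: "y \<in> carrier R"
    and eq: "[mod JR:] (JR +> x) \<Otimes> (JR +> y) = JR +> \<one>"
  shows "x \<otimes> y \<in> Units R"
proof -
  have z: "\<zero> \<in> JR" by (rule J_zero)
  have "x \<in> JR +> x" unfolding a_r_coset_def' using z x by force
  moreover have "y \<in> JR +> y" unfolding a_r_coset_def' using z y by force
  moreover have "x \<otimes> y \<in> JR +> (x \<otimes> y)" unfolding a_r_coset_def' using z x y by force
  ultimately have "x \<otimes> y \<in> [mod JR:] (JR +> x) \<Otimes> (JR +> y)"
    unfolding rcoset_mult_def by blast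
  then have "x \<otimes> y \<in> JR +> \<one>" using eq by simp
  then obtain h where h: "h \<in> JR" "x \<otimes> y = h \<oplus> \<one>" unfolding a_r_coset_def' by blast
  have hc: "h \<in> carrier R" using h J_carrier by blast
  have "x \<otimes> y = \<one> \<ominus> (\<ominus> h)" using h(2) hc by (simp add: a_minus_def a_comm)
  moreover have "\<one> \<ominus> (\<ominus> h) \<in> Units R" using J_unit J_neg h(1) by blast
  ultimately show ?thesis by simp
qed

lemma nonJ_unit:
  assumes x: "x \<in> carrier R" and nx: "x \<notin> JR"
  shows "x \<in> Units R"
proof -
  have dr: "division_ring (R Quot JR)" using loc by (simp add: local_ring_def)
  have z: "\<zero> \<in> JR" by (rule J_zero)
  have xin: "x \<in> JR +> x" unfolding a_r_coset_def' using z x by force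
  have c: "JR +> x \<in> carrier (R Quot JR)"
    unfolding FactRing_def A_RCOSETS_def' using x by auto
  have "JR +> x \<noteq> JR" using xin nx by blast
  then have "JR +> x \<in> Units (R Quot JR)"
    using dr c unfolding division_ring_def by (auto simp: FactRing_def)
  then obtain Y where Y: "Y \<in> carrier (R Quot JR)"
      "Y \<otimes>\<^bsub>R Quot JR\<^esub> (JR +> x) = \<one>\<^bsub>R Quot JR\<^esub>"
      "(JR +> x) \<otimes>\<^bsub>R Quot JR\<^esub> Y = \<one>\<^bsub>R Quot JR\<^esub>"
    unfolding Units_def by blast
  obtain y where y: "y \<in> carrier R" "Y = JR +> y"
    using Y(1) unfolding FactRing_def A_RCOSETS_def' by auto
  have e1: "[mod JR:] (JR +> x) \<Otimes> (JR +> y) = JR +> \<one>" using Y(3) y by (simp add: FactRing_def)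
  have e2: "[mod JR:] (JR +> y) \<Otimes> (JR +> x) = JR +> \<one>" using Y(2) y by (simp add: FactRing_def)
  show ?thesis using units_of_prod[OF x y(1) coset_prod[OF x y(1) e1] coset_prod[OF y(1) x e2]] .
qed

lemma dich: "x \<in> carrier R \<Longrightarrow> x \<in> JR \<or> x \<in> Units R"
  using nonJ_unit by blast

lemma one_ne_zero: "\<one> \<noteq> \<zero>"
  using J_one_notin J_zero by auto

lemma unit_add_J: "u \<in> Units R \<Longrightarrow> j \<in> JR \<Longrightarrow> u \<oplus> j \<in> Units R"
proof -
  assume u: "u \<in> Units R" and j: "j \<in> JR"
  have uc: "u \<in> carrier R" using u by blast
  have jc: "j \<in> carrier R" using j J_carrier by blast
  show ?thesis
  proof (rule ccontr)
    assume "u \<oplus> j \<notin> Units R"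
    then have "u \<oplus> j \<in> JR" using nonJ_unit uc jc by blast
    then have "(u \<oplus> j) \<ominus> j \<in> JR" using j J_minus by blast
    moreover have "(u \<oplus> j) \<ominus> j = u" using uc jc by (simp add: a_minus_def a_assoc r_neg)
    ultimately show False using J_not_unit u by simp
  qed
qed

lemma unit_minus_J: "u \<in> Units R \<Longrightarrow> j \<in> JR \<Longrightarrow> u \<ominus> j \<in> Units R"
  unfolding a_minus_def using unit_add_J J_neg by blast

lemma one_add_J: "j \<in> JR \<Longrightarrow> \<one> \<oplus> j \<in> Units R"
  using unit_add_J by blast

lemma prod_unit_l: "x \<in> carrier R \<Longrightarrow> y \<in> carrier R \<Longrightarrow> x \<otimes> y \<in> Units R \<Longrightarrow> x \<in> Units R"
  using dich J_rmult J_not_unit by blast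

lemma prod_unit_r: "x \<in> carrier R \<Longrightarrow> y \<in> carrier R \<Longrightarrow> x \<otimes> y \<in> Units R \<Longrightarrow> y \<in> Units R"
  using dich J_lmult J_not_unit by blast

lemma idem_mod_J:
  assumes a: "a \<in> carrier R" and h: "a \<otimes> (\<one> \<ominus> a) \<in> JR"
  shows "a \<in> JR \<or> \<one> \<ominus> a \<in> JR"
proof (rule ccontr)
  assume "\<not> ?thesis"
  then have "a \<in> Units R" "\<one> \<ominus> a \<in> Units R" using dich a by auto
  then have "a \<otimes> (\<one> \<ominus> a) \<in> Units R" by simp
  then show False using h J_not_unit by blast
qed

end


locale M2ctx = ring +
  fixes s
  assumes cen: "central R s"
begin

definition "t = s \<otimes> s"
abbreviation "T \<equiv> M2s R s"

lemma s_c: "s \<in> carrier R" using cen by (simp add: central_def)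
lemma t_c[simp]: "t \<in> carrier R" using s_c t_def by simp
lemma s_comm: "x \<in> carrier R \<Longrightarrow> s \<otimes> x = x \<otimes> s" using cen by (simp add: central_def)
lemma t_comm: "x \<in> carrier R \<Longrightarrow> x \<otimes> t = t \<otimes> x"
proof -
  assume x: "x \<in> carrier R"
  have "x \<otimes> (s \<otimes> s) = (x \<otimes> s) \<otimes> s" using x s_c by (simp only: m_assoc)
  also have "\<dots> = (s \<otimes> x) \<otimes> s" using s_comm[OF x] by simp
  also have "\<dots> = s \<otimes> (x \<otimes> s)" using x s_c by (simp only: m_assoc)
  also have "\<dots> = s \<otimes> (s \<otimes> x)" using s_comm[OF x] by simp
  also have "\<dots> = (s \<otimes> s) \<otimes> x" using x s_c by (simp only: m_assoc)
  finally show ?thesis unfolding t_def .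
qed
lemma t_lcomm: "x \<in> carrier R \<Longrightarrow> y \<in> carrier R \<Longrightarrow> x \<otimes> (t \<otimes> y) = t \<otimes> (x \<otimes> y)"
  by (simp add: m_assoc[symmetric] t_comm)

lemma T_carrier: "carrier T = carrier R \<times> carrier R \<times> carrier R \<times> carrier R"
  by (simp add: M2s_def)
lemma T_mult: "(a, b, c, d) \<otimes>\<^bsub>T\<^esub> (a', b', c', d') =
   (a \<otimes> a' \<oplus> t \<otimes> b \<otimes> c', a \<otimes> b' \<oplus> b \<otimes> d', c \<otimes> a' \<oplus> d \<otimes> c', t \<otimes> c \<otimes> b' \<oplus> d \<otimes> d')"
  by (simp add: M2s_def t_def)
lemma T_mult':
  assumes "a \<in> carrier R" "b \<in> carrier R" "c \<in> carrier R" "d \<in> carrier R"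
    "a' \<in> carrier R" "b' \<in> carrier R" "c' \<in> carrier R" "d' \<in> carrier R"
  shows "(a, b, c, d) \<otimes>\<^bsub>T\<^esub> (a', b', c', d') =
   (a \<otimes> a' \<oplus> t \<otimes> (b \<otimes> c'), a \<otimes> b' \<oplus> b \<otimes> d', c \<otimes> a' \<oplus> d \<otimes> c', t \<otimes> (c \<otimes> b') \<oplus> d \<otimes> d')"
  using assms by (simp add: T_mult m_assoc)
lemma T_one: "\<one>\<^bsub>T\<^esub> = (\<one>, \<zero>, \<zero>, \<one>)" by (simp add: M2s_def)
lemma T_zero: "\<zero>\<^bsub>T\<^esub> = (\<zero>, \<zero>, \<zero>, \<zero>)" by (simp add: M2s_def)
lemma T_add: "(a, b, c, d) \<oplus>\<^bsub>T\<^esub> (a', b', c', d') = (a \<oplus> a', b \<oplus> b', c \<oplus> c', d \<oplus> d')"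
  by (simp add: M2s_def)

lemma comp_assoc:
  assumes "a \<in> carrier R" "b \<in> carrier R" "c \<in> carrier R" "d \<in> carrier R"
    "a' \<in> carrier R" "b' \<in> carrier R" "c' \<in> carrier R" "d' \<in> carrier R"
    "a2 \<in> carrier R" "b2 \<in> carrier R" "c2 \<in> carrier R" "d2 \<in> carrier R"
  shows "((a, b, c, d) \<otimes>\<^bsub>T\<^esub> (a', b', c', d')) \<otimes>\<^bsub>T\<^esub> (a2, b2, c2, d2) =
         (a, b, c, d) \<otimes>\<^bsub>T\<^esub> ((a', b', c', d') \<otimes>\<^bsub>T\<^esub> (a2, b2, c2, d2))"
  using assms by (simp add: T_mult' l_distr r_distr m_assoc t_lcomm a_ac)

lemma comp_ldistr:
  assumes "a \<in> carrier R" "b \<in> carrier R" "c \<in> carrier R" "d \<in> carrier R"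
    "a' \<in> carrier R" "b' \<in> carrier R" "c' \<in> carrier R" "d' \<in> carrier R"
    "a2 \<in> carrier R" "b2 \<in> carrier R" "c2 \<in> carrier R" "d2 \<in> carrier R"
  shows "((a, b, c, d) \<oplus>\<^bsub>T\<^esub> (a', b', c', d')) \<otimes>\<^bsub>T\<^esub> (a2, b2, c2, d2) =
         (a, b, c, d) \<otimes>\<^bsub>T\<^esub> (a2, b2, c2, d2) \<oplus>\<^bsub>T\<^esub> (a', b', c', d') \<otimes>\<^bsub>T\<^esub> (a2, b2, c2, d2)"
  using assms by (simp add: T_mult' T_add l_distr r_distr a_ac)

lemma comp_rdistr:
  assumes "a \<in> carrier R" "b \<in> carrier R" "c \<in> carrier R" "d \<in> carrier R"
    "a' \<in> carrier R" "b' \<in> carrier R" "c' \<in> carrier R" "d' \<in> carrier R"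
    "a2 \<in> carrier R" "b2 \<in> carrier R" "c2 \<in> carrier R" "d2 \<in> carrier R"
  shows "(a2, b2, c2, d2) \<otimes>\<^bsub>T\<^esub> ((a, b, c, d) \<oplus>\<^bsub>T\<^esub> (a', b', c', d')) =
         (a2, b2, c2, d2) \<otimes>\<^bsub>T\<^esub> (a, b, c, d) \<oplus>\<^bsub>T\<^esub> (a2, b2, c2, d2) \<otimes>\<^bsub>T\<^esub> (a', b', c', d')"
  using assms by (simp add: T_mult' T_add l_distr r_distr a_ac)

lemma T_cases: "x \<in> carrier T \<Longrightarrow> (\<And>a b c d. x = (a, b, c, d) \<Longrightarrow> a \<in> carrier R \<Longrightarrow> b \<in> carrier R \<Longrightarrow>
   c \<in> carrier R \<Longrightarrow> d \<in> carrier R \<Longrightarrow> P) \<Longrightarrow> P"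
  by (cases x) (auto simp: T_carrier)

lemma T_ring: "ring T"
proof (rule ringI)
  show "abelian_group T"
  proof (rule abelian_groupI)
    fix x y assume "x \<in> carrier T" "y \<in> carrier T"
    then show "x \<oplus>\<^bsub>T\<^esub> y \<in> carrier T"
      by (elim T_cases) (simp add: T_carrier T_add)
  next
    show "\<zero>\<^bsub>T\<^esub> \<in> carrier T" by (simp add: T_carrier T_zero)
  next
    fix x y z assume "x \<in> carrier T" "y \<in> carrier T" "z \<in> carrier T"
    then show "x \<oplus>\<^bsub>T\<^esub> y \<oplus>\<^bsub>T\<^esub> z = x \<oplus>\<^bsub>T\<^esub> (y \<oplus>\<^bsub>T\<^esub> z)"
      by (elim T_cases) (simp add: T_add a_assoc)
  next
    fix x y assume "x \<in> carrier T" "y \<in> carrier T"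
    then show "x \<oplus>\<^bsub>T\<^esub> y = y \<oplus>\<^bsub>T\<^esub> x"
      by (elim T_cases) (simp add: T_add a_comm)
  next
    fix x assume "x \<in> carrier T"
    then show "\<zero>\<^bsub>T\<^esub> \<oplus>\<^bsub>T\<^esub> x = x"
      by (elim T_cases) (simp add: T_add T_zero)
  next
    fix x assume "x \<in> carrier T"
    then obtain a b c d where x: "x = (a, b, c, d)" "a \<in> carrier R" "b \<in> carrier R" "c \<in> carrier R" "d \<in> carrier R"
      by (elim T_cases)
    then show "\<exists>y\<in>carrier T. y \<oplus>\<^bsub>T\<^esub> x = \<zero>\<^bsub>T\<^esub>"
      by (intro bexI[of _ "(\<ominus> a, \<ominus> b, \<ominus> c, \<ominus> d)"]) (simp_all add: T_carrier T_add T_zero l_neg)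
  qed
next
  show "monoid T"
  proof (rule monoidI)
    fix x y assume "x \<in> carrier T" "y \<in> carrier T"
    then show "x \<otimes>\<^bsub>T\<^esub> y \<in> carrier T"
      by (elim T_cases) (simp add: T_carrier T_mult')
  next
    show "\<one>\<^bsub>T\<^esub> \<in> carrier T" by (simp add: T_carrier T_one)
  next
    fix x y z assume "x \<in> carrier T" "y \<in> carrier T" "z \<in> carrier T"
    then show "x \<otimes>\<^bsub>T\<^esub> y \<otimes>\<^bsub>T\<^esub> z = x \<otimes>\<^bsub>T\<^esub> (y \<otimes>\<^bsub>T\<^esub> z)"
      by (elim T_cases) (simp only: comp_assoc)
  next
    fix x assume "x \<in> carrier T"
    then show "\<one>\<^bsub>T\<^esub> \<otimes>\<^bsub>T\<^esub> x = x"
      by (elim T_cases) (simp add: T_mult' T_one)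
  next
    fix x assume "x \<in> carrier T"
    then show "x \<otimes>\<^bsub>T\<^esub> \<one>\<^bsub>T\<^esub> = x"
      by (elim T_cases) (simp add: T_mult' T_one)
  qed
next
  fix x y z assume "x \<in> carrier T" "y \<in> carrier T" "z \<in> carrier T"
  then show "(x \<oplus>\<^bsub>T\<^esub> y) \<otimes>\<^bsub>T\<^esub> z = x \<otimes>\<^bsub>T\<^esub> z \<oplus>\<^bsub>T\<^esub> y \<otimes>\<^bsub>T\<^esub> z"
    by (elim T_cases) (simp only: comp_ldistr)
next
  fix x y z assume "x \<in> carrier T" "y \<in> carrier T" "z \<in> carrier T"
  then show "z \<otimes>\<^bsub>T\<^esub> (x \<oplus>\<^bsub>T\<^esub> y) = z \<otimes>\<^bsub>T\<^esub> x \<oplus>\<^bsub>T\<^esub> z \<otimes>\<^bsub>T\<^esub> y"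
    by (elim T_cases) (simp only: comp_rdistr)
qed

end

context ring begin

lemma strongly_J_clean_conj:
  assumes P: "P \<in> Units R" and D: "D \<in> carrier R" and e0: "e0 \<in> carrier R"
    and ee: "e0 \<otimes> e0 = e0" and com: "D \<otimes> e0 = e0 \<otimes> D" and DJ: "D \<ominus> e0 \<in> jacobson R"
    and A: "A = P \<otimes> D \<otimes> inv P"
  shows "strongly_J_clean R A"
proof -
  have Pc: "P \<in> carrier R" and Pi: "inv P \<in> carrier R" using P by auto
  have PiP: "inv P \<otimes> P = \<one>" and PPi: "P \<otimes> inv P = \<one>" using P by auto
  define e where "e = P \<otimes> e0 \<otimes> inv P"
  have ec: "e \<in> carrier R" using e_def Pc Pi e0 by simp
  have "e \<otimes> e = P \<otimes> e0 \<otimes> (inv P \<otimes> P) \<otimes> e0 \<otimes> inv P"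
    using e_def Pc Pi e0 by (simp add: m_assoc)
  also have "\<dots> = P \<otimes> (e0 \<otimes> e0) \<otimes> inv P" using PiP Pc Pi e0 by (simp add: m_assoc)
  finally have e2: "e \<otimes> e = e" using ee e_def by simp
  have "A \<otimes> e = P \<otimes> D \<otimes> (inv P \<otimes> P) \<otimes> e0 \<otimes> inv P"
    using A e_def Pc Pi e0 D by (simp add: m_assoc)
  also have "\<dots> = P \<otimes> (D \<otimes> e0) \<otimes> inv P" using PiP Pc Pi e0 D by (simp add: m_assoc)
  also have "\<dots> = P \<otimes> (e0 \<otimes> D) \<otimes> inv P" using com by simp
  also have "\<dots> = P \<otimes> e0 \<otimes> (inv P \<otimes> P) \<otimes> D \<otimes> inv P" using PiP Pc Pi e0 D by (simp add: m_assoc)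
  also have "\<dots> = e \<otimes> A" using A e_def Pc Pi e0 D by (simp add: m_assoc)
  finally have ae: "A \<otimes> e = e \<otimes> A" .
  have "A \<ominus> e = P \<otimes> (D \<ominus> e0) \<otimes> inv P"
    using A e_def Pc Pi e0 D by (simp add: a_minus_def r_distr l_distr r_minus l_minus)
  moreover have "P \<otimes> (D \<ominus> e0) \<otimes> inv P \<in> jacobson R"
    using J_lmult J_rmult DJ Pc Pi by simp
  ultimately have "A \<ominus> e \<in> jacobson R" by simp
  then show ?thesis unfolding strongly_J_clean_def using ec e2 ae by blast
qed

lemma similar_D:
  assumes "similar R A D" and A: "A \<in> carrier R"
  shows "\<exists>P \<in> Units R. A = P \<otimes> D \<otimes> inv P"
proof -
  obtain Q where Q: "Q \<in> Units R" "D = inv Q \<otimes> A \<otimes> Q" using assms unfolding similar_def by blast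
  have Qc: "Q \<in> carrier R" "inv Q \<in> carrier R" using Q by auto
  have "Q \<otimes> D \<otimes> inv Q = (Q \<otimes> inv Q) \<otimes> A \<otimes> (Q \<otimes> inv Q)" using Q(2) Qc A by (simp add: m_assoc)
  also have "\<dots> = A" using Q(1) A by simp
  finally show ?thesis using Q(1) by metis
qed

lemma similar_trans:
  assumes "similar R A B" "similar R B C" and A: "A \<in> carrier R"
  shows "similar R A C"
proof -
  obtain P where P: "P \<in> Units R" "B = inv P \<otimes> A \<otimes> P" using assms(1) unfolding similar_def by blast
  obtain Q where Q: "Q \<in> Units R" "C = inv Q \<otimes> B \<otimes> Q" using assms(2) unfolding similar_def by blast
  have c: "P \<in> carrier R" "Q \<in> carrier R" "inv P \<in> carrier R" "inv Q \<in> carrier R" using P Q by auto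
  have "(P \<otimes> Q) \<otimes> (inv Q \<otimes> inv P) = P \<otimes> (Q \<otimes> inv Q) \<otimes> inv P" using c by (simp add: m_assoc)
  also have "\<dots> = \<one>" using P Q c by simp
  finally have 1: "(P \<otimes> Q) \<otimes> (inv Q \<otimes> inv P) = \<one>" .
  have "(inv Q \<otimes> inv P) \<otimes> (P \<otimes> Q) = inv Q \<otimes> (inv P \<otimes> P) \<otimes> Q" using c by (simp add: m_assoc)
  also have "\<dots> = \<one>" using P Q c by simp
  finally have 2: "(inv Q \<otimes> inv P) \<otimes> (P \<otimes> Q) = \<one>" .
  have iv: "inv Q \<otimes> inv P = inv (P \<otimes> Q)" using inv_unique'[OF _ _ 1 2] c by simp
  have "C = (inv Q \<otimes> inv P) \<otimes> A \<otimes> (P \<otimes> Q)" using P(2) Q(2) c A by (simp add: m_assoc)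
  then have "C = inv (P \<otimes> Q) \<otimes> A \<otimes> (P \<otimes> Q)" using iv by simp
  moreover have "P \<otimes> Q \<in> Units R" using P Q by simp
  ultimately show ?thesis unfolding similar_def by blast
qed

lemma clean_conj_back:
  assumes A: "A \<in> carrier R" and e: "e \<in> carrier R" and ea: "A \<otimes> e = e \<otimes> A" and AJ: "A \<ominus> e \<in> jacobson R"
    and P: "P \<in> Units R" and e0: "e0 \<in> carrier R" and Pe: "P \<otimes> e = e0 \<otimes> P"
  shows "(P \<otimes> A \<otimes> inv P) \<otimes> e0 = e0 \<otimes> (P \<otimes> A \<otimes> inv P)"
    "(P \<otimes> A \<otimes> inv P) \<ominus> e0 \<in> jacobson R"
    "similar R A (P \<otimes> A \<otimes> inv P)"
    "P \<otimes> A \<otimes> inv P \<in> carrier R"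
proof -
  have c: "P \<in> carrier R" "inv P \<in> carrier R" using P by auto
  have PiP: "inv P \<otimes> P = \<one>" and PPi: "P \<otimes> inv P = \<one>" using P by auto
  have e0eq: "e0 = P \<otimes> e \<otimes> inv P"
  proof -
    have "P \<otimes> e \<otimes> inv P = e0 \<otimes> P \<otimes> inv P" using Pe by simp
    also have "\<dots> = e0 \<otimes> (P \<otimes> inv P)" using c e0 by (simp add: m_assoc)
    finally show ?thesis using PPi e0 by simp
  qed
  have "(P \<otimes> A \<otimes> inv P) \<otimes> e0 = P \<otimes> A \<otimes> (inv P \<otimes> P) \<otimes> e \<otimes> inv P"
    using e0eq c A e by (simp add: m_assoc)
  also have "\<dots> = P \<otimes> (A \<otimes> e) \<otimes> inv P" using PiP c A e by (simp add: m_assoc)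
  also have "\<dots> = P \<otimes> (e \<otimes> A) \<otimes> inv P" using ea by simp
  also have "\<dots> = P \<otimes> e \<otimes> (inv P \<otimes> P) \<otimes> A \<otimes> inv P" using PiP c A e by (simp add: m_assoc)
  also have "\<dots> = e0 \<otimes> (P \<otimes> A \<otimes> inv P)" using e0eq c A e by (simp add: m_assoc)
  finally show "(P \<otimes> A \<otimes> inv P) \<otimes> e0 = e0 \<otimes> (P \<otimes> A \<otimes> inv P)" .
  have "(P \<otimes> A \<otimes> inv P) \<ominus> e0 = P \<otimes> (A \<ominus> e) \<otimes> inv P"
    using e0eq c A e by (simp add: a_minus_def r_distr l_distr r_minus l_minus)
  moreover have "P \<otimes> (A \<ominus> e) \<otimes> inv P \<in> jacobson R"
    using J_lmult J_rmult AJ c by simp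
  ultimately show "(P \<otimes> A \<otimes> inv P) \<ominus> e0 \<in> jacobson R" by simp
  have "inv (inv P) = P" using P by simp
  then have "P \<otimes> A \<otimes> inv P = inv (inv P) \<otimes> A \<otimes> inv P" by simp
  moreover have "inv P \<in> Units R" using P by simp
  ultimately show "similar R A (P \<otimes> A \<otimes> inv P)" unfolding similar_def by blast
  show "P \<otimes> A \<otimes> inv P \<in> carrier R" using c A by simp
qed

lemma idem_compl:
  assumes e: "e \<in> carrier R" and ee: "e \<otimes> e = e"
  shows "(\<one> \<ominus> e) \<otimes> (\<one> \<ominus> e) = \<one> \<ominus> e"
proof -
  have "(\<one> \<ominus> e) \<otimes> (\<one> \<ominus> e) = \<one> \<ominus> e \<ominus> e \<oplus> e \<otimes> e"
    using e by (simp add: a_minus_def l_distr r_distr l_minus r_minus a_ac minus_add minus_minus)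
  also have "\<dots> = \<one> \<ominus> e" using ee e by (simp add: a_minus_def a_assoc l_neg)
  finally show ?thesis .
qed

lemma minus_eq0: "x \<in> carrier R \<Longrightarrow> y \<in> carrier R \<Longrightarrow> x \<ominus> y = \<zero> \<Longrightarrow> x = y"
proof -
  assume c: "x \<in> carrier R" "y \<in> carrier R" and e: "x \<ominus> y = \<zero>"
  have "x = (x \<ominus> y) \<oplus> y" using c by (simp add: a_minus_def a_assoc l_neg)
  then show "x = y" using e c by simp
qed

lemma add_eq_sub: "x \<in> carrier R \<Longrightarrow> y \<in> carrier R \<Longrightarrow> x \<oplus> y = z \<Longrightarrow> y = z \<ominus> x"
proof -
  assume c: "x \<in> carrier R" "y \<in> carrier R" and e: "x \<oplus> y = z"
  have "(x \<oplus> y) \<ominus> x = y" using c by algebra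
  then show ?thesis using e by simp
qed

lemma minus_swap: "x \<in> carrier R \<Longrightarrow> y \<in> carrier R \<Longrightarrow> \<ominus> (x \<ominus> y) = y \<ominus> x"
  by algebra

lemma minus_zero_r: "x \<in> carrier R \<Longrightarrow> x \<ominus> \<zero> = x"
  by (simp add: a_minus_def)

end

locale LM = M2ctx +
  assumes lo: "local_ring R"

sublocale LM \<subseteq> localR
  by unfold_locales (rule lo)

context LM begin

abbreviation "TJ \<equiv> jacobson T"

lemma T_ab: "abelian_group T" using ringE(1)[OF T_ring] .
lemma T_mon: "monoid T" using ringE(2)[OF T_ring] .

lemma T_neg:
  assumes "a \<in> carrier R" "b \<in> carrier R" "c \<in> carrier R" "d \<in> carrier R"
  shows "\<ominus>\<^bsub>T\<^esub> (a, b, c, d) = (\<ominus> a, \<ominus> b, \<ominus> c, \<ominus> d)"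
  using assms by (intro abelian_group.minus_equality[OF T_ab]) (simp_all add: T_carrier T_add T_zero l_neg)

lemma T_minus:
  assumes "a \<in> carrier R" "b \<in> carrier R" "c \<in> carrier R" "d \<in> carrier R"
    "a' \<in> carrier R" "b' \<in> carrier R" "c' \<in> carrier R" "d' \<in> carrier R"
  shows "(a, b, c, d) \<ominus>\<^bsub>T\<^esub> (a', b', c', d') = (a \<ominus> a', b \<ominus> b', c \<ominus> c', d \<ominus> d')"
  using assms by (simp add: a_minus_def T_neg T_add)

lemma TunitI:
  assumes "X \<in> carrier T" "Y \<in> carrier T" "X \<otimes>\<^bsub>T\<^esub> Y = \<one>\<^bsub>T\<^esub>" "Y \<otimes>\<^bsub>T\<^esub> X = \<one>\<^bsub>T\<^esub>"
  shows "X \<in> Units T"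
  using assms unfolding Units_def by blast

lemma U_lower: "x \<in> carrier R \<Longrightarrow> (\<one>, \<zero>, x, \<one>) \<in> Units T"
  by (rule TunitI[of _ "(\<one>, \<zero>, \<ominus> x, \<one>)"]) (simp_all add: T_carrier T_mult' T_one r_neg l_neg)

lemma U_upper: "x \<in> carrier R \<Longrightarrow> (\<one>, x, \<zero>, \<one>) \<in> Units T"
  by (rule TunitI[of _ "(\<one>, \<ominus> x, \<zero>, \<one>)"]) (simp_all add: T_carrier T_mult' T_one r_neg l_neg)

lemma U_diag:
  assumes u: "x \<in> Units R" "y \<in> Units R" shows "(x, \<zero>, \<zero>, y) \<in> Units T"
proof -
  have c: "x \<in> carrier R" "y \<in> carrier R" "inv x \<in> carrier R" "inv y \<in> carrier R" using u by auto
  show ?thesis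
    by (rule TunitI[of _ "(inv x, \<zero>, \<zero>, inv y)"]) (use c u in \<open>simp_all add: T_carrier T_mult' T_one\<close>)
qed

lemma U_schur:
  assumes al: "\<alpha> \<in> Units R" and c: "\<beta> \<in> carrier R" "\<gamma> \<in> carrier R" "\<delta> \<in> carrier R"
    and S: "\<delta> \<ominus> t \<otimes> (\<gamma> \<otimes> (inv \<alpha> \<otimes> \<beta>)) \<in> Units R"
  shows "(\<alpha>, \<beta>, \<gamma>, \<delta>) \<in> Units T"
proof -
  define q where "q = t \<otimes> (\<gamma> \<otimes> (inv \<alpha> \<otimes> \<beta>))"
  define S where "S = \<delta> \<ominus> q"
  have ac: "\<alpha> \<in> carrier R" "inv \<alpha> \<in> carrier R" using al by auto
  have qc: "q \<in> carrier R" using q_def ac c by simp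
  have Sc: "S \<in> carrier R" using S_def qc c by simp
  have SU: "S \<in> Units R" using S S_def q_def by simp
  have L: "(\<one>, \<zero>, \<gamma> \<otimes> inv \<alpha>, \<one>) \<in> Units T" using U_lower ac c by simp
  have D: "(\<alpha>, \<zero>, \<zero>, S) \<in> Units T" using U_diag al SU by simp
  have U: "(\<one>, inv \<alpha> \<otimes> \<beta>, \<zero>, \<one>) \<in> Units T" using U_upper ac c by simp
  have LD: "(\<one>, \<zero>, \<gamma> \<otimes> inv \<alpha>, \<one>) \<otimes>\<^bsub>T\<^esub> (\<alpha>, \<zero>, \<zero>, S) = (\<alpha>, \<zero>, \<gamma>, S)"
    using ac c Sc al by (simp add: T_mult' m_assoc)
  have qS: "q \<oplus> S = \<delta>" using S_def qc c by algebra
  have aib: "\<alpha> \<otimes> (inv \<alpha> \<otimes> \<beta>) = \<beta>" using al ac c by (simp add: m_assoc[symmetric])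
  have LDU: "(\<alpha>, \<zero>, \<gamma>, S) \<otimes>\<^bsub>T\<^esub> (\<one>, inv \<alpha> \<otimes> \<beta>, \<zero>, \<one>) = (\<alpha>, \<beta>, \<gamma>, \<delta>)"
    using ac c Sc al qS aib by (simp add: T_mult' m_assoc q_def)
  have "((\<one>, \<zero>, \<gamma> \<otimes> inv \<alpha>, \<one>) \<otimes>\<^bsub>T\<^esub> (\<alpha>, \<zero>, \<zero>, S)) \<otimes>\<^bsub>T\<^esub> (\<one>, inv \<alpha> \<otimes> \<beta>, \<zero>, \<one>) \<in> Units T"
    using L D U monoid.Units_m_closed[OF T_mon] by blast
  then show ?thesis using LD LDU by simp
qed

lemma U_JJ:
  assumes "\<alpha> \<in> Units R" "\<delta> \<in> Units R" "\<beta> \<in> JR" "\<gamma> \<in> JR"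
  shows "(\<alpha>, \<beta>, \<gamma>, \<delta>) \<in> Units T"
proof -
  have c: "\<beta> \<in> carrier R" "\<gamma> \<in> carrier R" "\<delta> \<in> carrier R" "inv \<alpha> \<in> carrier R"
    using assms J_carrier by auto
  have "\<gamma> \<otimes> (inv \<alpha> \<otimes> \<beta>) \<in> JR" using J_rmult assms c by simp
  then have "t \<otimes> (\<gamma> \<otimes> (inv \<alpha> \<otimes> \<beta>)) \<in> JR" using J_lmult by simp
  then have "\<delta> \<ominus> t \<otimes> (\<gamma> \<otimes> (inv \<alpha> \<otimes> \<beta>)) \<in> Units R" using unit_minus_J assms by simp
  then show ?thesis using U_schur assms c by simp
qed

lemma JT_entries:
  assumes J: "a \<in> JR" "b \<in> JR" "c \<in> JR" "d \<in> JR"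
  shows "(a, b, c, d) \<in> TJ"
proof (rule ring.J_crit[OF T_ring])
  have c: "a \<in> carrier R" "b \<in> carrier R" "c \<in> carrier R" "d \<in> carrier R" using J J_carrier by auto
  then show "(a, b, c, d) \<in> carrier T" by (simp add: T_carrier)
  fix y assume y: "y \<in> carrier T"
  then obtain p q r u where yy: "y = (p, q, r, u)" "p \<in> carrier R" "q \<in> carrier R" "r \<in> carrier R" "u \<in> carrier R"
    by (elim T_cases)
  define j1 where "j1 = p \<otimes> a \<oplus> t \<otimes> (q \<otimes> c)"
  define j2 where "j2 = p \<otimes> b \<oplus> q \<otimes> d"
  define j3 where "j3 = r \<otimes> a \<oplus> u \<otimes> c"
  define j4 where "j4 = t \<otimes> (r \<otimes> b) \<oplus> u \<otimes> d"
  have jJ: "j1 \<in> JR" "j2 \<in> JR" "j3 \<in> JR" "j4 \<in> JR"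
    unfolding j1_def j2_def j3_def j4_def using J yy c by (simp_all add: J_add J_lmult)
  have jc: "j1 \<in> carrier R" "j2 \<in> carrier R" "j3 \<in> carrier R" "j4 \<in> carrier R" using jJ J_carrier by auto
  have yX: "y \<otimes>\<^bsub>T\<^esub> (a, b, c, d) = (j1, j2, j3, j4)"
    using yy c by (simp add: T_mult' j1_def j2_def j3_def j4_def)
  have Z: "\<one>\<^bsub>T\<^esub> \<ominus>\<^bsub>T\<^esub> y \<otimes>\<^bsub>T\<^esub> (a, b, c, d) = (\<one> \<ominus> j1, \<ominus> j2, \<ominus> j3, \<one> \<ominus> j4)"
  proof -
    have "\<one>\<^bsub>T\<^esub> \<ominus>\<^bsub>T\<^esub> (j1, j2, j3, j4) = (\<one> \<ominus> j1, \<zero> \<ominus> j2, \<zero> \<ominus> j3, \<one> \<ominus> j4)"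
      unfolding T_one using jc by (intro T_minus) simp_all
    then show ?thesis using jc yX by (simp add: a_minus_def)
  qed
  have "(\<one> \<ominus> j1, \<ominus> j2, \<ominus> j3, \<one> \<ominus> j4) \<in> Units T"
    using U_JJ J_unit J_neg jJ by simp
  then have "\<one>\<^bsub>T\<^esub> \<ominus>\<^bsub>T\<^esub> y \<otimes>\<^bsub>T\<^esub> (a, b, c, d) \<in> Units T" using Z by simp
  then show "\<exists>w\<in>carrier T. w \<otimes>\<^bsub>T\<^esub> (\<one>\<^bsub>T\<^esub> \<ominus>\<^bsub>T\<^esub> y \<otimes>\<^bsub>T\<^esub> (a, b, c, d)) = \<one>\<^bsub>T\<^esub>"
    using monoid.Units_l_inv_ex[OF T_mon] by blast
qed

lemma e11_ne0: "(\<one>, \<zero>, \<zero>, \<zero>) \<noteq> \<zero>\<^bsub>T\<^esub>" using one_ne_zero by (simp add: T_zero)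
lemma e22_ne0: "(\<zero>, \<zero>, \<zero>, \<one>) \<noteq> \<zero>\<^bsub>T\<^esub>" using one_ne_zero by (simp add: T_zero)

lemma diag_J:
  assumes X: "(x, \<zero>, \<zero>, y) \<in> TJ" and c: "x \<in> carrier R" "y \<in> carrier R"
  shows "x \<in> JR" "y \<in> JR"
proof -
  show "x \<in> JR"
  proof (rule ccontr)
    assume "x \<notin> JR"
    then have u: "x \<in> Units R" using nonJ_unit c by simp
    have "(inv x, \<zero>, \<zero>, \<zero>) \<otimes>\<^bsub>T\<^esub> (x, \<zero>, \<zero>, y) \<in> TJ"
      using ring.J_lmult[OF T_ring _ X] u by (simp add: T_carrier)
    moreover have "(inv x, \<zero>, \<zero>, \<zero>) \<otimes>\<^bsub>T\<^esub> (x, \<zero>, \<zero>, y) = (\<one>, \<zero>, \<zero>, \<zero>)"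
      using u c by (simp add: T_mult')
    ultimately have "(\<one>, \<zero>, \<zero>, \<zero>) \<in> TJ" by simp
    moreover have "(\<one>, \<zero>, \<zero>, \<zero>) \<otimes>\<^bsub>T\<^esub> (\<one>, \<zero>, \<zero>, \<zero>) = (\<one>, \<zero>, \<zero>, \<zero>)" by (simp add: T_mult')
    ultimately show False using ring.J_idem[OF T_ring] e11_ne0 by blast
  qed
  show "y \<in> JR"
  proof (rule ccontr)
    assume "y \<notin> JR"
    then have u: "y \<in> Units R" using nonJ_unit c by simp
    have "(\<zero>, \<zero>, \<zero>, inv y) \<otimes>\<^bsub>T\<^esub> (x, \<zero>, \<zero>, y) \<in> TJ"
      using ring.J_lmult[OF T_ring _ X] u by (simp add: T_carrier)
    moreover have "(\<zero>, \<zero>, \<zero>, inv y) \<otimes>\<^bsub>T\<^esub> (x, \<zero>, \<zero>, y) = (\<zero>, \<zero>, \<zero>, \<one>)"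
      using u c by (simp add: T_mult')
    ultimately have "(\<zero>, \<zero>, \<zero>, \<one>) \<in> TJ" by simp
    moreover have "(\<zero>, \<zero>, \<zero>, \<one>) \<otimes>\<^bsub>T\<^esub> (\<zero>, \<zero>, \<zero>, \<one>) = (\<zero>, \<zero>, \<zero>, \<one>)" by (simp add: T_mult')
    ultimately show False using ring.J_idem[OF T_ring] e22_ne0 by blast
  qed
qed

end

context LM begin

lemmas RS = ring_simprules r_one

lemma aux_J:
  assumes x: "x \<in> Units R" and x1: "\<one> \<ominus> x \<in> JR" and c: "c \<in> carrier R" "b \<in> carrier R"
    and tcb: "t \<otimes> (c \<otimes> b) \<in> JR"
  shows "t \<otimes> (c \<otimes> (inv x \<otimes> b)) \<in> JR"
proof -
  have xc: "x \<in> carrier R" "inv x \<in> carrier R" using x by auto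
  have "inv x \<otimes> (\<one> \<ominus> x) \<in> JR" using J_lmult x1 xc by simp
  moreover have "inv x \<otimes> (\<one> \<ominus> x) = inv x \<ominus> \<one>"
  proof -
    have "inv x \<otimes> (\<one> \<ominus> x) = inv x \<ominus> inv x \<otimes> x" using xc by (simp add: RS)
    then show ?thesis using x by simp
  qed
  ultimately have k: "inv x \<ominus> \<one> \<in> JR" by simp
  have kc: "inv x \<ominus> \<one> \<in> carrier R" using xc by simp
  have "t \<otimes> (c \<otimes> (inv x \<otimes> b)) = t \<otimes> (c \<otimes> b) \<oplus> t \<otimes> (c \<otimes> ((inv x \<ominus> \<one>) \<otimes> b))"
    using xc c by (simp add: RS)
  moreover have "t \<otimes> (c \<otimes> ((inv x \<ominus> \<one>) \<otimes> b)) \<in> JR"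
    using J_lmult J_rmult k kc c by simp
  ultimately show ?thesis using J_add tcb by simp
qed

lemma idem_eqs:
  assumes c: "a \<in> carrier R" "b \<in> carrier R" "c \<in> carrier R" "d \<in> carrier R"
    and E: "(a, b, c, d) \<otimes>\<^bsub>T\<^esub> (a, b, c, d) = (a, b, c, d)"
  shows "a \<otimes> a \<oplus> t \<otimes> (b \<otimes> c) = a" "a \<otimes> b \<oplus> b \<otimes> d = b"
    "c \<otimes> a \<oplus> d \<otimes> c = c" "t \<otimes> (c \<otimes> b) \<oplus> d \<otimes> d = d"
  using E c by (simp_all add: T_mult')

lemma idem_eqs2:
  assumes c: "a \<in> carrier R" "b \<in> carrier R" "c \<in> carrier R" "d \<in> carrier R"
    and E: "(a, b, c, d) \<otimes>\<^bsub>T\<^esub> (a, b, c, d) = (a, b, c, d)"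
  shows "t \<otimes> (b \<otimes> c) = a \<otimes> (\<one> \<ominus> a)" "b \<otimes> d = (\<one> \<ominus> a) \<otimes> b"
    "d \<otimes> c = c \<otimes> (\<one> \<ominus> a)" "t \<otimes> (c \<otimes> b) = d \<otimes> (\<one> \<ominus> d)"
proof -
  note e = idem_eqs[OF c E]
  have "t \<otimes> (b \<otimes> c) = a \<ominus> a \<otimes> a" using add_eq_sub[OF _ _ e(1)] c by simp
  also have "\<dots> = a \<otimes> (\<one> \<ominus> a)" using c by (simp add: RS)
  finally show "t \<otimes> (b \<otimes> c) = a \<otimes> (\<one> \<ominus> a)" .
  have "b \<otimes> d = b \<ominus> a \<otimes> b" using add_eq_sub[OF _ _ e(2)] c by simp
  also have "\<dots> = (\<one> \<ominus> a) \<otimes> b" using c by (simp add: RS)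
  finally show "b \<otimes> d = (\<one> \<ominus> a) \<otimes> b" .
  have "d \<otimes> c = c \<ominus> c \<otimes> a" using add_eq_sub[OF _ _ e(3)] c by simp
  also have "\<dots> = c \<otimes> (\<one> \<ominus> a)" using c by (simp add: RS)
  finally show "d \<otimes> c = c \<otimes> (\<one> \<ominus> a)" .
  have e4': "d \<otimes> d \<oplus> t \<otimes> (c \<otimes> b) = d" using e(4) c by (simp add: a_comm)
  have "t \<otimes> (c \<otimes> b) = d \<ominus> d \<otimes> d" using add_eq_sub[OF _ _ e4'] c by simp
  also have "\<dots> = d \<otimes> (\<one> \<ominus> d)" using c by (simp add: RS)
  finally show "t \<otimes> (c \<otimes> b) = d \<otimes> (\<one> \<ominus> d)" .
qed

lemma conj_u:
  assumes c: "a \<in> carrier R" "b \<in> carrier R" "c \<in> carrier R" "d \<in> carrier R"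
    and E: "(a, b, c, d) \<otimes>\<^bsub>T\<^esub> (a, b, c, d) = (a, b, c, d)"
  shows "(a, b, \<ominus> c, \<one> \<ominus> d) \<otimes>\<^bsub>T\<^esub> (a, b, c, d) = (\<one>, \<zero>, \<zero>, \<zero>) \<otimes>\<^bsub>T\<^esub> (a, b, \<ominus> c, \<one> \<ominus> d)"
proof -
  note e = idem_eqs[OF c E]
  have x3: "(\<ominus> c) \<otimes> a \<oplus> (\<one> \<ominus> d) \<otimes> c = c \<ominus> (c \<otimes> a \<oplus> d \<otimes> c)" using c by (simp add: RS)
  have x4: "t \<otimes> ((\<ominus> c) \<otimes> b) \<oplus> (\<one> \<ominus> d) \<otimes> d = d \<ominus> (t \<otimes> (c \<otimes> b) \<oplus> d \<otimes> d)" using c by (simp add: RS)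
  have y3: "(\<ominus> c) \<otimes> a \<oplus> (\<one> \<ominus> d) \<otimes> c = \<zero>" using x3 e(3) c by (simp add: a_minus_def r_neg)
  have y4: "t \<otimes> ((\<ominus> c) \<otimes> b) \<oplus> (\<one> \<ominus> d) \<otimes> d = \<zero>" using x4 e(4) c by (simp add: a_minus_def r_neg)
  have "(a, b, \<ominus> c, \<one> \<ominus> d) \<otimes>\<^bsub>T\<^esub> (a, b, c, d) =
     (a \<otimes> a \<oplus> t \<otimes> (b \<otimes> c), a \<otimes> b \<oplus> b \<otimes> d, (\<ominus> c) \<otimes> a \<oplus> (\<one> \<ominus> d) \<otimes> c, t \<otimes> ((\<ominus> c) \<otimes> b) \<oplus> (\<one> \<ominus> d) \<otimes> d)"
    using c by (intro T_mult') simp_all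
  also have "\<dots> = (a, b, \<zero>, \<zero>)" using e(1,2) y3 y4 by simp
  also have "\<dots> = (\<one>, \<zero>, \<zero>, \<zero>) \<otimes>\<^bsub>T\<^esub> (a, b, \<ominus> c, \<one> \<ominus> d)" using c by (simp add: T_mult')
  finally show ?thesis .
qed

lemma conj_u':
  assumes c: "a \<in> carrier R" "b \<in> carrier R" "c \<in> carrier R" "d \<in> carrier R"
    and E: "(a, b, c, d) \<otimes>\<^bsub>T\<^esub> (a, b, c, d) = (a, b, c, d)"
  shows "(\<one> \<ominus> a, \<ominus> b, c, d) \<otimes>\<^bsub>T\<^esub> (a, b, c, d) = (\<zero>, \<zero>, \<zero>, \<one>) \<otimes>\<^bsub>T\<^esub> (\<one> \<ominus> a, \<ominus> b, c, d)"
proof -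
  note e = idem_eqs[OF c E]
  have x1: "(\<one> \<ominus> a) \<otimes> a \<oplus> t \<otimes> ((\<ominus> b) \<otimes> c) = a \<ominus> (a \<otimes> a \<oplus> t \<otimes> (b \<otimes> c))" using c by (simp add: RS)
  have x2: "(\<one> \<ominus> a) \<otimes> b \<oplus> (\<ominus> b) \<otimes> d = b \<ominus> (a \<otimes> b \<oplus> b \<otimes> d)" using c by (simp add: RS)
  have y1: "(\<one> \<ominus> a) \<otimes> a \<oplus> t \<otimes> ((\<ominus> b) \<otimes> c) = \<zero>" using x1 e(1) c by (simp add: a_minus_def r_neg)
  have y2: "(\<one> \<ominus> a) \<otimes> b \<oplus> (\<ominus> b) \<otimes> d = \<zero>" using x2 e(2) c by (simp add: a_minus_def r_neg)
  have "(\<one> \<ominus> a, \<ominus> b, c, d) \<otimes>\<^bsub>T\<^esub> (a, b, c, d) =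
     ((\<one> \<ominus> a) \<otimes> a \<oplus> t \<otimes> ((\<ominus> b) \<otimes> c), (\<one> \<ominus> a) \<otimes> b \<oplus> (\<ominus> b) \<otimes> d, c \<otimes> a \<oplus> d \<otimes> c, t \<otimes> (c \<otimes> b) \<oplus> d \<otimes> d)"
    using c by (intro T_mult') simp_all
  also have "\<dots> = (\<zero>, \<zero>, c, d)" using e(3,4) y1 y2 by simp
  also have "\<dots> = (\<zero>, \<zero>, \<zero>, \<one>) \<otimes>\<^bsub>T\<^esub> (\<one> \<ominus> a, \<ominus> b, c, d)" using c by (simp add: T_mult')
  finally show ?thesis .
qed

lemma idem_class:
  assumes Ec: "E \<in> carrier T" and EE: "E \<otimes>\<^bsub>T\<^esub> E = E"
  shows "E = \<zero>\<^bsub>T\<^esub> \<or> E = \<one>\<^bsub>T\<^esub> \<or> (\<exists>P\<in>Units T. P \<otimes>\<^bsub>T\<^esub> E = (\<one>, \<zero>, \<zero>, \<zero>) \<otimes>\<^bsub>T\<^esub> P)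
     \<or> (\<exists>P\<in>Units T. P \<otimes>\<^bsub>T\<^esub> E = (\<zero>, \<zero>, \<zero>, \<one>) \<otimes>\<^bsub>T\<^esub> P)"
proof -
  obtain a b c d where E: "E = (a, b, c, d)" and c: "a \<in> carrier R" "b \<in> carrier R" "c \<in> carrier R" "d \<in> carrier R"
    using Ec by (elim T_cases)
  have EE': "(a, b, c, d) \<otimes>\<^bsub>T\<^esub> (a, b, c, d) = (a, b, c, d)" using EE E by simp
  note f = idem_eqs2[OF c EE'] and e = idem_eqs[OF c EE']
  have isZero: "E = \<zero>\<^bsub>T\<^esub>" if "E \<in> TJ" using ring.J_idem[OF T_ring that EE] .
  have isOne: "E = \<one>\<^bsub>T\<^esub>" if h: "\<one>\<^bsub>T\<^esub> \<ominus>\<^bsub>T\<^esub> E \<in> TJ"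
  proof -
    have "(\<one>\<^bsub>T\<^esub> \<ominus>\<^bsub>T\<^esub> E) \<otimes>\<^bsub>T\<^esub> (\<one>\<^bsub>T\<^esub> \<ominus>\<^bsub>T\<^esub> E) = \<one>\<^bsub>T\<^esub> \<ominus>\<^bsub>T\<^esub> E"
      using ring.idem_compl[OF T_ring Ec EE] .
    then have "\<one>\<^bsub>T\<^esub> \<ominus>\<^bsub>T\<^esub> E = \<zero>\<^bsub>T\<^esub>" using ring.J_idem[OF T_ring h] by simp
    then show ?thesis using ring.minus_eq0[OF T_ring _ Ec] monoid.one_closed[OF T_mon] by metis
  qed
  have uU: "\<exists>P\<in>Units T. P \<otimes>\<^bsub>T\<^esub> E = (\<one>, \<zero>, \<zero>, \<zero>) \<otimes>\<^bsub>T\<^esub> P"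
    if au: "a \<in> Units R" and Su: "(\<one> \<ominus> d) \<oplus> t \<otimes> (c \<otimes> (inv a \<otimes> b)) \<in> Units R"
  proof -
    have ic: "inv a \<in> carrier R" using au by simp
    have "(\<one> \<ominus> d) \<ominus> t \<otimes> ((\<ominus> c) \<otimes> (inv a \<otimes> b)) = (\<one> \<ominus> d) \<oplus> t \<otimes> (c \<otimes> (inv a \<otimes> b))"
      using c ic by (simp add: RS)
    then have "(a, b, \<ominus> c, \<one> \<ominus> d) \<in> Units T" using U_schur[OF au] c Su by simp
    then show ?thesis using conj_u[OF c EE'] E by blast
  qed
  have u'U: "\<exists>P\<in>Units T. P \<otimes>\<^bsub>T\<^esub> E = (\<zero>, \<zero>, \<zero>, \<one>) \<otimes>\<^bsub>T\<^esub> P"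
    if au: "\<one> \<ominus> a \<in> Units R" and Su: "d \<oplus> t \<otimes> (c \<otimes> (inv (\<one> \<ominus> a) \<otimes> b)) \<in> Units R"
  proof -
    have ic: "inv (\<one> \<ominus> a) \<in> carrier R" using au by simp
    have "d \<ominus> t \<otimes> (c \<otimes> (inv (\<one> \<ominus> a) \<otimes> (\<ominus> b))) = d \<oplus> t \<otimes> (c \<otimes> (inv (\<one> \<ominus> a) \<otimes> b))"
      using c ic by (simp add: RS)
    then have "(\<one> \<ominus> a, \<ominus> b, c, d) \<in> Units T" using U_schur[OF au] c Su by simp
    then show ?thesis using conj_u'[OF c EE'] E by blast
  qed
  have one_minus_d: "(\<one> \<ominus> d) \<oplus> d = \<one>" using c by (simp add: a_minus_def a_assoc l_neg)
  have d_one_minus: "d \<oplus> (\<one> \<ominus> d) = \<one>" using c one_minus_d a_comm[of d "\<one> \<ominus> d"] by simp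
  show ?thesis
  proof (cases "a \<in> JR")
    case False
    then have au: "a \<in> Units R" using nonJ_unit c by simp
    have ic: "inv a \<in> carrier R" using au by simp
    show ?thesis
    proof (cases "\<one> \<ominus> a \<in> JR")
      case False
      then have a1u: "\<one> \<ominus> a \<in> Units R" using nonJ_unit c by simp
      define w where "w = t \<otimes> b"
      have wc: "w \<in> carrier R" using w_def c by simp
      have wce: "w \<otimes> c = a \<otimes> (\<one> \<ominus> a)" using f(1) c by (simp add: w_def m_assoc)
      have "w \<otimes> c \<in> Units R" using wce au a1u by simp
      then have wU: "w \<in> Units R" using prod_unit_l wc c by blast
      have comm1: "a \<otimes> (\<one> \<ominus> a) = (\<one> \<ominus> a) \<otimes> a" using c by (simp add: RS)
      have k1: "a \<otimes> (\<one> \<ominus> a) \<otimes> inv a = \<one> \<ominus> a"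
      proof -
        have "a \<otimes> (\<one> \<ominus> a) \<otimes> inv a = (\<one> \<ominus> a) \<otimes> (a \<otimes> inv a)" using comm1 c ic by (simp add: m_assoc)
        then show ?thesis using au c by simp
      qed
      have k2: "(\<one> \<ominus> a) \<otimes> w = w \<otimes> d"
      proof -
        have "(\<one> \<ominus> a) \<otimes> w = t \<otimes> ((\<one> \<ominus> a) \<otimes> b)" using c by (simp add: w_def t_lcomm)
        also have "\<dots> = t \<otimes> (b \<otimes> d)" using f(2) by simp
        also have "\<dots> = w \<otimes> d" using c by (simp add: w_def m_assoc)
        finally show ?thesis .
      qed
      have "w \<otimes> (c \<otimes> (inv a \<otimes> w)) = (w \<otimes> c) \<otimes> inv a \<otimes> w" using wc c ic by (simp add: m_assoc)
      also have "\<dots> = (\<one> \<ominus> a) \<otimes> w" using wce k1 by simp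
      also have "\<dots> = w \<otimes> d" by (rule k2)
      finally have "c \<otimes> (inv a \<otimes> w) = d" using wU wc c ic by simp
      moreover have "c \<otimes> (inv a \<otimes> w) = t \<otimes> (c \<otimes> (inv a \<otimes> b))" using c ic by (simp add: w_def t_lcomm)
      ultimately have "t \<otimes> (c \<otimes> (inv a \<otimes> b)) = d" by simp
      then have "(\<one> \<ominus> d) \<oplus> t \<otimes> (c \<otimes> (inv a \<otimes> b)) \<in> Units R" using one_minus_d by simp
      then show ?thesis using uU au by blast
    next
      case a1J: True
      show ?thesis
      proof (cases "d \<in> JR")
        case True
        have "t \<otimes> (c \<otimes> b) \<in> JR" using f(4) J_rmult True c by simp
        then have "t \<otimes> (c \<otimes> (inv a \<otimes> b)) \<in> JR" using aux_J[OF au a1J] c by simp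
        moreover have "\<one> \<ominus> d \<in> Units R" using J_unit True by simp
        ultimately have "(\<one> \<ominus> d) \<oplus> t \<otimes> (c \<otimes> (inv a \<otimes> b)) \<in> Units R" using unit_add_J by simp
        then show ?thesis using uU au by blast
      next
        case False
        then have du: "d \<in> Units R" using nonJ_unit c by simp
        have idc: "inv d \<in> carrier R" using du by simp
        have "b \<otimes> d \<in> JR" using f(2) J_rmult a1J c by simp
        then have "(b \<otimes> d) \<otimes> inv d \<in> JR" using J_rmult idc by simp
        then have bJ: "b \<in> JR" using du c idc by (simp add: m_assoc)
        have "d \<otimes> c \<in> JR" using f(3) J_lmult a1J c by simp
        then have "inv d \<otimes> (d \<otimes> c) \<in> JR" using J_lmult idc by simp
        then have cJ: "c \<in> JR" using du c idc by (simp add: m_assoc[symmetric])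
        have "t \<otimes> (c \<otimes> b) \<in> JR" using J_lmult J_rmult cJ c by simp
        then have "d \<otimes> (\<one> \<ominus> d) \<in> JR" using f(4) by simp
        then have "inv d \<otimes> (d \<otimes> (\<one> \<ominus> d)) \<in> JR" using J_lmult idc by simp
        then have d1J: "\<one> \<ominus> d \<in> JR" using du c idc by (simp add: m_assoc[symmetric])
        have "\<one>\<^bsub>T\<^esub> \<ominus>\<^bsub>T\<^esub> E = (\<one> \<ominus> a, \<zero> \<ominus> b, \<zero> \<ominus> c, \<one> \<ominus> d)"
          unfolding E T_one using c by (intro T_minus) simp_all
        moreover have "(\<one> \<ominus> a, \<zero> \<ominus> b, \<zero> \<ominus> c, \<one> \<ominus> d) \<in> TJ"
          using JT_entries a1J d1J J_neg bJ cJ c by (simp add: a_minus_def)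
        ultimately show ?thesis using isOne by simp
      qed
    qed
  next
    case aJ: True
    have a1u: "\<one> \<ominus> a \<in> Units R" using J_unit aJ by simp
    have ic: "inv (\<one> \<ominus> a) \<in> carrier R" using a1u by simp
    show ?thesis
    proof (cases "d \<in> JR")
      case dJ: True
      have "a \<otimes> b \<oplus> b \<otimes> d \<in> JR" using J_add J_rmult J_lmult aJ dJ c by simp
      then have bJ: "b \<in> JR" using e(2) by simp
      have "c \<otimes> a \<oplus> d \<otimes> c \<in> JR" using J_add J_rmult J_lmult aJ dJ c by simp
      then have cJ: "c \<in> JR" using e(3) by simp
      have "E \<in> TJ" using E JT_entries aJ bJ cJ dJ by simp
      then show ?thesis using isZero by simp
    next
      case False
      then have du: "d \<in> Units R" using nonJ_unit c by simp
      have idc: "inv d \<in> carrier R" using du by simp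
      show ?thesis
      proof (cases "\<one> \<ominus> d \<in> JR")
        case d1J: True
        have "t \<otimes> (c \<otimes> b) \<in> JR" using f(4) J_lmult d1J c by simp
        moreover have "\<one> \<ominus> (\<one> \<ominus> a) \<in> JR"
        proof -
          have "\<one> \<ominus> (\<one> \<ominus> a) = a" using c by (simp add: RS)
          then show ?thesis using aJ by simp
        qed
        ultimately have "t \<otimes> (c \<otimes> (inv (\<one> \<ominus> a) \<otimes> b)) \<in> JR" using aux_J[OF a1u] c by simp
        then have "d \<oplus> t \<otimes> (c \<otimes> (inv (\<one> \<ominus> a) \<otimes> b)) \<in> Units R" using unit_add_J du by simp
        then show ?thesis using u'U a1u by blast
      next
        case False
        then have d1u: "\<one> \<ominus> d \<in> Units R" using nonJ_unit c by simp
        define w where "w = t \<otimes> c"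
        have wc: "w \<in> carrier R" using w_def c by simp
        have wbe: "w \<otimes> b = d \<otimes> (\<one> \<ominus> d)" using f(4) c by (simp add: w_def m_assoc)
        have k2: "w \<otimes> (\<one> \<ominus> a) = d \<otimes> w"
        proof -
          have "w \<otimes> (\<one> \<ominus> a) = t \<otimes> (c \<otimes> (\<one> \<ominus> a))" using c by (simp add: w_def m_assoc)
          also have "\<dots> = t \<otimes> (d \<otimes> c)" using f(3) by simp
          also have "\<dots> = d \<otimes> w" using c by (simp add: w_def t_lcomm)
          finally show ?thesis .
        qed
        have k3: "w \<otimes> inv (\<one> \<ominus> a) = inv d \<otimes> w"
        proof -
          have "inv d \<otimes> w = inv d \<otimes> w \<otimes> ((\<one> \<ominus> a) \<otimes> inv (\<one> \<ominus> a))" using a1u idc wc by simp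
          also have "\<dots> = inv d \<otimes> (w \<otimes> (\<one> \<ominus> a)) \<otimes> inv (\<one> \<ominus> a)" using idc wc ic c by (simp add: m_assoc)
          also have "\<dots> = inv d \<otimes> (d \<otimes> w) \<otimes> inv (\<one> \<ominus> a)" using k2 by simp
          also have "\<dots> = (inv d \<otimes> d) \<otimes> w \<otimes> inv (\<one> \<ominus> a)" using idc wc ic c by (simp add: m_assoc)
          also have "\<dots> = w \<otimes> inv (\<one> \<ominus> a)" using du wc ic by simp
          finally show ?thesis by simp
        qed
        have "t \<otimes> (c \<otimes> (inv (\<one> \<ominus> a) \<otimes> b)) = (w \<otimes> inv (\<one> \<ominus> a)) \<otimes> b" using c ic by (simp add: w_def m_assoc)
        also have "\<dots> = inv d \<otimes> (w \<otimes> b)" using k3 idc wc c by (simp add: m_assoc)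
        also have "\<dots> = inv d \<otimes> (d \<otimes> (\<one> \<ominus> d))" using wbe by simp
        also have "\<dots> = \<one> \<ominus> d" using du idc c by (simp add: m_assoc[symmetric])
        finally have "t \<otimes> (c \<otimes> (inv (\<one> \<ominus> a) \<otimes> b)) = \<one> \<ominus> d" .
        then have "d \<oplus> t \<otimes> (c \<otimes> (inv (\<one> \<ominus> a) \<otimes> b)) \<in> Units R" using d_one_minus by simp
        then show ?thesis using u'U a1u by blast
      qed
    qed
  qed
qed

end

context LM begin

lemma e11_c: "(\<one>, \<zero>, \<zero>, \<zero>) \<in> carrier T" by (simp add: T_carrier)
lemma e22_c: "(\<zero>, \<zero>, \<zero>, \<one>) \<in> carrier T" by (simp add: T_carrier)

lemma diag_clean:
  assumes v: "v \<in> carrier R" "v \<ominus> \<one> \<in> JR" and w: "w \<in> JR" and A: "A \<in> carrier T"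
    and sim: "similar T A (v, \<zero>, \<zero>, w)"
  shows "strongly_J_clean T A"
proof -
  have wc: "w \<in> carrier R" using w J_carrier by blast
  obtain P where P: "P \<in> Units T" "A = P \<otimes>\<^bsub>T\<^esub> (v, \<zero>, \<zero>, w) \<otimes>\<^bsub>T\<^esub> inv\<^bsub>T\<^esub> P"
    using ring.similar_D[OF T_ring sim A] by blast
  show ?thesis
  proof (rule ring.strongly_J_clean_conj[OF T_ring P(1) _ e11_c _ _ _ P(2)])
    show "(v, \<zero>, \<zero>, w) \<in> carrier T" using v wc by (simp add: T_carrier)
    show "(\<one>, \<zero>, \<zero>, \<zero>) \<otimes>\<^bsub>T\<^esub> (\<one>, \<zero>, \<zero>, \<zero>) = (\<one>, \<zero>, \<zero>, \<zero>)" by (simp add: T_mult')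
    show "(v, \<zero>, \<zero>, w) \<otimes>\<^bsub>T\<^esub> (\<one>, \<zero>, \<zero>, \<zero>) = (\<one>, \<zero>, \<zero>, \<zero>) \<otimes>\<^bsub>T\<^esub> (v, \<zero>, \<zero>, w)"
      using v wc by (simp add: T_mult')
    have "(v, \<zero>, \<zero>, w) \<ominus>\<^bsub>T\<^esub> (\<one>, \<zero>, \<zero>, \<zero>) = (v \<ominus> \<one>, \<zero> \<ominus> \<zero>, \<zero> \<ominus> \<zero>, w \<ominus> \<zero>)"
      using v wc by (intro T_minus) simp_all
    also have "\<dots> = (v \<ominus> \<one>, \<zero>, \<zero>, w)" using wc by (simp add: a_minus_def)
    finally show "(v, \<zero>, \<zero>, w) \<ominus>\<^bsub>T\<^esub> (\<one>, \<zero>, \<zero>, \<zero>) \<in> TJ"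
      using JT_entries v w J_zero by simp
  qed
qed

lemma diag_clean':
  assumes v: "v \<in> carrier R" "v \<ominus> \<one> \<in> JR" and w: "w \<in> JR" and A: "A \<in> carrier T"
    and sim: "similar T A (w, \<zero>, \<zero>, v)"
  shows "strongly_J_clean T A"
proof -
  have wc: "w \<in> carrier R" using w J_carrier by blast
  obtain P where P: "P \<in> Units T" "A = P \<otimes>\<^bsub>T\<^esub> (w, \<zero>, \<zero>, v) \<otimes>\<^bsub>T\<^esub> inv\<^bsub>T\<^esub> P"
    using ring.similar_D[OF T_ring sim A] by blast
  show ?thesis
  proof (rule ring.strongly_J_clean_conj[OF T_ring P(1) _ e22_c _ _ _ P(2)])
    show "(w, \<zero>, \<zero>, v) \<in> carrier T" using v wc by (simp add: T_carrier)
    show "(\<zero>, \<zero>, \<zero>, \<one>) \<otimes>\<^bsub>T\<^esub> (\<zero>, \<zero>, \<zero>, \<one>) = (\<zero>, \<zero>, \<zero>, \<one>)" by (simp add: T_mult')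
    show "(w, \<zero>, \<zero>, v) \<otimes>\<^bsub>T\<^esub> (\<zero>, \<zero>, \<zero>, \<one>) = (\<zero>, \<zero>, \<zero>, \<one>) \<otimes>\<^bsub>T\<^esub> (w, \<zero>, \<zero>, v)"
      using v wc by (simp add: T_mult')
    have "(w, \<zero>, \<zero>, v) \<ominus>\<^bsub>T\<^esub> (\<zero>, \<zero>, \<zero>, \<one>) = (w \<ominus> \<zero>, \<zero> \<ominus> \<zero>, \<zero> \<ominus> \<zero>, v \<ominus> \<one>)"
      using v wc by (intro T_minus) simp_all
    also have "\<dots> = (w, \<zero>, \<zero>, v \<ominus> \<one>)" using wc by (simp add: a_minus_def)
    finally show "(w, \<zero>, \<zero>, v) \<ominus>\<^bsub>T\<^esub> (\<zero>, \<zero>, \<zero>, \<one>) \<in> TJ"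
      using JT_entries v w J_zero by simp
  qed
qed

lemma back11:
  assumes A: "A \<in> carrier T" and e: "e \<in> carrier T" and ea: "A \<otimes>\<^bsub>T\<^esub> e = e \<otimes>\<^bsub>T\<^esub> A"
    and AJ: "A \<ominus>\<^bsub>T\<^esub> e \<in> TJ" and P: "P \<in> Units T" and Pe: "P \<otimes>\<^bsub>T\<^esub> e = (\<one>, \<zero>, \<zero>, \<zero>) \<otimes>\<^bsub>T\<^esub> P"
  shows "\<exists>v w. v \<in> carrier R \<and> v \<ominus> \<one> \<in> JR \<and> w \<in> JR \<and> similar T A (v, \<zero>, \<zero>, w)"
proof -
  note bk = ring.clean_conj_back[OF T_ring A e ea AJ P e11_c Pe]
  define B where "B = P \<otimes>\<^bsub>T\<^esub> A \<otimes>\<^bsub>T\<^esub> inv\<^bsub>T\<^esub> P"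
  obtain p q r u where Bq: "B = (p, q, r, u)" and c: "p \<in> carrier R" "q \<in> carrier R" "r \<in> carrier R" "u \<in> carrier R"
    using bk(4) B_def by (elim T_cases) auto
  have "(p, q, r, u) \<otimes>\<^bsub>T\<^esub> (\<one>, \<zero>, \<zero>, \<zero>) = (\<one>, \<zero>, \<zero>, \<zero>) \<otimes>\<^bsub>T\<^esub> (p, q, r, u)"
    using bk(1) B_def Bq by simp
  then have qr: "q = \<zero>" "r = \<zero>" using c by (simp_all add: T_mult')
  have "(p, \<zero>, \<zero>, u) \<ominus>\<^bsub>T\<^esub> (\<one>, \<zero>, \<zero>, \<zero>) \<in> TJ" using bk(2) B_def Bq qr by simp
  moreover have "(p, \<zero>, \<zero>, u) \<ominus>\<^bsub>T\<^esub> (\<one>, \<zero>, \<zero>, \<zero>) = (p \<ominus> \<one>, \<zero> \<ominus> \<zero>, \<zero> \<ominus> \<zero>, u \<ominus> \<zero>)"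
    using c by (intro T_minus) simp_all
  ultimately have "(p \<ominus> \<one>, \<zero>, \<zero>, u) \<in> TJ" using c by (simp add: a_minus_def)
  then have "p \<ominus> \<one> \<in> JR" "u \<in> JR" using diag_J c by simp_all
  moreover have "similar T A (p, \<zero>, \<zero>, u)" using bk(3) B_def Bq qr by simp
  ultimately show ?thesis using c by blast
qed

lemma back22:
  assumes A: "A \<in> carrier T" and e: "e \<in> carrier T" and ea: "A \<otimes>\<^bsub>T\<^esub> e = e \<otimes>\<^bsub>T\<^esub> A"
    and AJ: "A \<ominus>\<^bsub>T\<^esub> e \<in> TJ" and P: "P \<in> Units T" and Pe: "P \<otimes>\<^bsub>T\<^esub> e = (\<zero>, \<zero>, \<zero>, \<one>) \<otimes>\<^bsub>T\<^esub> P"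
  shows "\<exists>v w. v \<in> carrier R \<and> v \<ominus> \<one> \<in> JR \<and> w \<in> JR \<and> similar T A (w, \<zero>, \<zero>, v)"
proof -
  note bk = ring.clean_conj_back[OF T_ring A e ea AJ P e22_c Pe]
  define B where "B = P \<otimes>\<^bsub>T\<^esub> A \<otimes>\<^bsub>T\<^esub> inv\<^bsub>T\<^esub> P"
  obtain p q r u where Bq: "B = (p, q, r, u)" and c: "p \<in> carrier R" "q \<in> carrier R" "r \<in> carrier R" "u \<in> carrier R"
    using bk(4) B_def by (elim T_cases) auto
  have "(p, q, r, u) \<otimes>\<^bsub>T\<^esub> (\<zero>, \<zero>, \<zero>, \<one>) = (\<zero>, \<zero>, \<zero>, \<one>) \<otimes>\<^bsub>T\<^esub> (p, q, r, u)"
    using bk(1) B_def Bq by simp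
  then have qr: "q = \<zero>" "r = \<zero>" using c by (simp_all add: T_mult')
  have "(p, \<zero>, \<zero>, u) \<ominus>\<^bsub>T\<^esub> (\<zero>, \<zero>, \<zero>, \<one>) \<in> TJ" using bk(2) B_def Bq qr by simp
  moreover have "(p, \<zero>, \<zero>, u) \<ominus>\<^bsub>T\<^esub> (\<zero>, \<zero>, \<zero>, \<one>) = (p \<ominus> \<zero>, \<zero> \<ominus> \<zero>, \<zero> \<ominus> \<zero>, u \<ominus> \<one>)"
    using c by (intro T_minus) simp_all
  ultimately have "(p, \<zero>, \<zero>, u \<ominus> \<one>) \<in> TJ" using c by (simp add: a_minus_def)
  then have "p \<in> JR" "u \<ominus> \<one> \<in> JR" using diag_J c by simp_all
  moreover have "similar T A (p, \<zero>, \<zero>, u)" using bk(3) B_def Bq qr by simp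
  ultimately show ?thesis using c by blast
qed

lemma swap_sim:
  assumes su: "s \<in> Units R" and c: "p \<in> carrier R" "u \<in> carrier R"
  shows "similar T (p, \<zero>, \<zero>, u) (u, \<zero>, \<zero>, p)"
proof -
  have tu: "t \<in> Units R" using su t_def by simp
  have itc: "inv t \<in> carrier R" using tu by simp
  have tit: "t \<otimes> inv t = \<one>" using tu by simp
  have W1: "(\<zero>, \<one>, \<one>, \<zero>) \<otimes>\<^bsub>T\<^esub> (\<zero>, inv t, inv t, \<zero>) = \<one>\<^bsub>T\<^esub>"
    using itc tit by (simp add: T_mult' T_one)
  have W2: "(\<zero>, inv t, inv t, \<zero>) \<otimes>\<^bsub>T\<^esub> (\<zero>, \<one>, \<one>, \<zero>) = \<one>\<^bsub>T\<^esub>"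
    using itc tit by (simp add: T_mult' T_one)
  have Wc: "(\<zero>, \<one>, \<one>, \<zero>) \<in> carrier T" "(\<zero>, inv t, inv t, \<zero>) \<in> carrier T" using itc by (simp_all add: T_carrier)
  have WU: "(\<zero>, \<one>, \<one>, \<zero>) \<in> Units T" using TunitI[OF Wc W1 W2] .
  have Wi: "(\<zero>, inv t, inv t, \<zero>) = inv\<^bsub>T\<^esub> (\<zero>, \<one>, \<one>, \<zero>)"
    using monoid.inv_unique'[OF T_mon Wc W1 W2] .
  have k: "t \<otimes> (inv t \<otimes> x) = x" if "x \<in> carrier R" for x
    using that itc tit by (simp add: m_assoc[symmetric])
  have "(\<zero>, inv t, inv t, \<zero>) \<otimes>\<^bsub>T\<^esub> (p, \<zero>, \<zero>, u) = (\<zero>, inv t \<otimes> u, inv t \<otimes> p, \<zero>)"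
    using itc c by (simp add: T_mult')
  moreover have "(\<zero>, inv t \<otimes> u, inv t \<otimes> p, \<zero>) \<otimes>\<^bsub>T\<^esub> (\<zero>, \<one>, \<one>, \<zero>) = (u, \<zero>, \<zero>, p)"
    using itc c k by (simp add: T_mult')
  ultimately have "(u, \<zero>, \<zero>, p) = inv\<^bsub>T\<^esub> (\<zero>, \<one>, \<one>, \<zero>) \<otimes>\<^bsub>T\<^esub> (p, \<zero>, \<zero>, u) \<otimes>\<^bsub>T\<^esub> (\<zero>, \<one>, \<one>, \<zero>)"
    using Wi by simp
  then show ?thesis unfolding similar_def using WU by blast
qed

end

theorem lemma2p8:
  fixes R :: "('a, 'b) ring_scheme" and s :: 'a and A :: "'a \<times> 'a \<times> 'a \<times> 'a"
  assumes "local_ring R"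
    and "central R s"
    and "A \<in> carrier (M2s R s)"
  shows "strongly_J_clean (M2s R s) A \<longleftrightarrow>
    (A \<in> jacobson (M2s R s)
     \<or> \<one>\<^bsub>M2s R s\<^esub> \<ominus>\<^bsub>M2s R s\<^esub> A \<in> jacobson (M2s R s)
     \<or> (s \<in> Units R \<and>
        (\<exists>v w. v \<in> carrier R \<and> v \<ominus>\<^bsub>R\<^esub> \<one>\<^bsub>R\<^esub> \<in> jacobson R \<and> w \<in> jacobson R \<and>
           similar (M2s R s) A (v, \<zero>\<^bsub>R\<^esub>, \<zero>\<^bsub>R\<^esub>, w)))
     \<or> (s \<in> jacobson R \<and>
        (\<exists>v w. v \<in> carrier R \<and> v \<ominus>\<^bsub>R\<^esub> \<one>\<^bsub>R\<^esub> \<in> jacobson R \<and> w \<in> jacobson R \<and>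
           (similar (M2s R s) A (v, \<zero>\<^bsub>R\<^esub>, \<zero>\<^bsub>R\<^esub>, w) \<or>
            similar (M2s R s) A (w, \<zero>\<^bsub>R\<^esub>, \<zero>\<^bsub>R\<^esub>, v)))))"
proof -
  have rR: "ring R" using assms(1) by (simp add: local_ring_def)
  interpret L: LM R s
    using rR assms(1,2) by (simp add: LM_def M2ctx_def LM_axioms_def M2ctx_axioms_def)
  have Tr: "ring (M2s R s)" by (rule L.T_ring)
  have Ac: "A \<in> carrier (M2s R s)" by (rule assms(3))
  have sc: "s \<in> carrier R" by (rule L.s_c)
  show ?thesis
  proof
    assume "strongly_J_clean (M2s R s) A"
    then obtain e where e: "e \<in> carrier (M2s R s)" "e \<otimes>\<^bsub>M2s R s\<^esub> e = e"
      "A \<otimes>\<^bsub>M2s R s\<^esub> e = e \<otimes>\<^bsub>M2s R s\<^esub> A" "A \<ominus>\<^bsub>M2s R s\<^esub> e \<in> jacobson (M2s R s)"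
      unfolding strongly_J_clean_def by blast
    from L.idem_class[OF e(1,2)] show "(A \<in> jacobson (M2s R s)
     \<or> \<one>\<^bsub>M2s R s\<^esub> \<ominus>\<^bsub>M2s R s\<^esub> A \<in> jacobson (M2s R s)
     \<or> (s \<in> Units R \<and>
        (\<exists>v w. v \<in> carrier R \<and> v \<ominus>\<^bsub>R\<^esub> \<one>\<^bsub>R\<^esub> \<in> jacobson R \<and> w \<in> jacobson R \<and>
           similar (M2s R s) A (v, \<zero>\<^bsub>R\<^esub>, \<zero>\<^bsub>R\<^esub>, w)))
     \<or> (s \<in> jacobson R \<and>
        (\<exists>v w. v \<in> carrier R \<and> v \<ominus>\<^bsub>R\<^esub> \<one>\<^bsub>R\<^esub> \<in> jacobson R \<and> w \<in> jacobson R \<and>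
           (similar (M2s R s) A (v, \<zero>\<^bsub>R\<^esub>, \<zero>\<^bsub>R\<^esub>, w) \<or>
            similar (M2s R s) A (w, \<zero>\<^bsub>R\<^esub>, \<zero>\<^bsub>R\<^esub>, v)))))"
    proof (elim disjE)
      assume "e = \<zero>\<^bsub>M2s R s\<^esub>"
      then have "A \<in> jacobson (M2s R s)" using e(4) ring.minus_zero_r[OF Tr Ac] by simp
      then show ?thesis by blast
    next
      assume e1: "e = \<one>\<^bsub>M2s R s\<^esub>"
      have "\<ominus>\<^bsub>M2s R s\<^esub> (A \<ominus>\<^bsub>M2s R s\<^esub> e) \<in> jacobson (M2s R s)" using ring.J_neg[OF Tr e(4)] .
      moreover have "\<ominus>\<^bsub>M2s R s\<^esub> (A \<ominus>\<^bsub>M2s R s\<^esub> e) = \<one>\<^bsub>M2s R s\<^esub> \<ominus>\<^bsub>M2s R s\<^esub> A"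
        using ring.minus_swap[OF Tr Ac e(1)] e1 by simp
      ultimately show ?thesis by simp
    next
      assume "\<exists>P\<in>Units (M2s R s). P \<otimes>\<^bsub>M2s R s\<^esub> e = (\<one>\<^bsub>R\<^esub>, \<zero>\<^bsub>R\<^esub>, \<zero>\<^bsub>R\<^esub>, \<zero>\<^bsub>R\<^esub>) \<otimes>\<^bsub>M2s R s\<^esub> P"
      then obtain P where P: "P \<in> Units (M2s R s)" "P \<otimes>\<^bsub>M2s R s\<^esub> e = (\<one>\<^bsub>R\<^esub>, \<zero>\<^bsub>R\<^esub>, \<zero>\<^bsub>R\<^esub>, \<zero>\<^bsub>R\<^esub>) \<otimes>\<^bsub>M2s R s\<^esub> P" by blast
      obtain v w where vw: "v \<in> carrier R" "v \<ominus>\<^bsub>R\<^esub> \<one>\<^bsub>R\<^esub> \<in> jacobson R" "w \<in> jacobson R"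
          "similar (M2s R s) A (v, \<zero>\<^bsub>R\<^esub>, \<zero>\<^bsub>R\<^esub>, w)"
        using L.back11[OF Ac e(1,3,4) P] by blast
      from L.dich[OF sc] show ?thesis
      proof
        assume "s \<in> jacobson R" then show ?thesis using vw by blast
      next
        assume "s \<in> Units R" then show ?thesis using vw by blast
      qed
    next
      assume "\<exists>P\<in>Units (M2s R s). P \<otimes>\<^bsub>M2s R s\<^esub> e = (\<zero>\<^bsub>R\<^esub>, \<zero>\<^bsub>R\<^esub>, \<zero>\<^bsub>R\<^esub>, \<one>\<^bsub>R\<^esub>) \<otimes>\<^bsub>M2s R s\<^esub> P"
      then obtain P where P: "P \<in> Units (M2s R s)" "P \<otimes>\<^bsub>M2s R s\<^esub> e = (\<zero>\<^bsub>R\<^esub>, \<zero>\<^bsub>R\<^esub>, \<zero>\<^bsub>R\<^esub>, \<one>\<^bsub>R\<^esub>) \<otimes>\<^bsub>M2s R s\<^esub> P" by blast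
      obtain v w where vw: "v \<in> carrier R" "v \<ominus>\<^bsub>R\<^esub> \<one>\<^bsub>R\<^esub> \<in> jacobson R" "w \<in> jacobson R"
          "similar (M2s R s) A (w, \<zero>\<^bsub>R\<^esub>, \<zero>\<^bsub>R\<^esub>, v)"
        using L.back22[OF Ac e(1,3,4) P] by blast
      from L.dich[OF sc] show ?thesis
      proof
        assume "s \<in> jacobson R" then show ?thesis using vw by blast
      next
        assume su: "s \<in> Units R"
        have wc: "w \<in> carrier R" using vw(3) L.J_carrier by blast
        have "similar (M2s R s) A (v, \<zero>\<^bsub>R\<^esub>, \<zero>\<^bsub>R\<^esub>, w)"
          using ring.similar_trans[OF Tr vw(4) L.swap_sim[OF su wc vw(1)] Ac] .
        then show ?thesis using vw su by blast
      qed
    qed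
  next
    assume H: "(A \<in> jacobson (M2s R s)
     \<or> \<one>\<^bsub>M2s R s\<^esub> \<ominus>\<^bsub>M2s R s\<^esub> A \<in> jacobson (M2s R s)
     \<or> (s \<in> Units R \<and>
        (\<exists>v w. v \<in> carrier R \<and> v \<ominus>\<^bsub>R\<^esub> \<one>\<^bsub>R\<^esub> \<in> jacobson R \<and> w \<in> jacobson R \<and>
           similar (M2s R s) A (v, \<zero>\<^bsub>R\<^esub>, \<zero>\<^bsub>R\<^esub>, w)))
     \<or> (s \<in> jacobson R \<and>
        (\<exists>v w. v \<in> carrier R \<and> v \<ominus>\<^bsub>R\<^esub> \<one>\<^bsub>R\<^esub> \<in> jacobson R \<and> w \<in> jacobson R \<and>
           (similar (M2s R s) A (v, \<zero>\<^bsub>R\<^esub>, \<zero>\<^bsub>R\<^esub>, w) \<or>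
            similar (M2s R s) A (w, \<zero>\<^bsub>R\<^esub>, \<zero>\<^bsub>R\<^esub>, v)))))"
    have z: "\<zero>\<^bsub>M2s R s\<^esub> \<in> carrier (M2s R s)" using ring.ring_simprules(2)[OF Tr] .
    have o: "\<one>\<^bsub>M2s R s\<^esub> \<in> carrier (M2s R s)" using ring.ring_simprules(6)[OF Tr] .
    have c1: "strongly_J_clean (M2s R s) A" if AJ: "A \<in> jacobson (M2s R s)"
      unfolding strongly_J_clean_def
    proof (intro bexI[of _ "\<zero>\<^bsub>M2s R s\<^esub>"] conjI)
      show "\<zero>\<^bsub>M2s R s\<^esub> \<otimes>\<^bsub>M2s R s\<^esub> \<zero>\<^bsub>M2s R s\<^esub> = \<zero>\<^bsub>M2s R s\<^esub>" using ring.ring_simprules(25)[OF Tr z] .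
      show "A \<otimes>\<^bsub>M2s R s\<^esub> \<zero>\<^bsub>M2s R s\<^esub> = \<zero>\<^bsub>M2s R s\<^esub> \<otimes>\<^bsub>M2s R s\<^esub> A"
        using ring.ring_simprules(24,25)[OF Tr Ac] by simp
      show "A \<ominus>\<^bsub>M2s R s\<^esub> \<zero>\<^bsub>M2s R s\<^esub> \<in> jacobson (M2s R s)" using ring.minus_zero_r[OF Tr Ac] AJ by simp
    qed (rule z)
    have c2: "strongly_J_clean (M2s R s) A" if AJ: "\<one>\<^bsub>M2s R s\<^esub> \<ominus>\<^bsub>M2s R s\<^esub> A \<in> jacobson (M2s R s)"
      unfolding strongly_J_clean_def
    proof (intro bexI[of _ "\<one>\<^bsub>M2s R s\<^esub>"] conjI)
      show "\<one>\<^bsub>M2s R s\<^esub> \<otimes>\<^bsub>M2s R s\<^esub> \<one>\<^bsub>M2s R s\<^esub> = \<one>\<^bsub>M2s R s\<^esub>" using monoid.l_one[OF L.T_mon o] .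
      show "A \<otimes>\<^bsub>M2s R s\<^esub> \<one>\<^bsub>M2s R s\<^esub> = \<one>\<^bsub>M2s R s\<^esub> \<otimes>\<^bsub>M2s R s\<^esub> A"
        using monoid.l_one[OF L.T_mon Ac] monoid.r_one[OF L.T_mon Ac] by simp
      have "A \<ominus>\<^bsub>M2s R s\<^esub> \<one>\<^bsub>M2s R s\<^esub> = \<ominus>\<^bsub>M2s R s\<^esub> (\<one>\<^bsub>M2s R s\<^esub> \<ominus>\<^bsub>M2s R s\<^esub> A)"
        using ring.minus_swap[OF Tr o Ac] by simp
      then show "A \<ominus>\<^bsub>M2s R s\<^esub> \<one>\<^bsub>M2s R s\<^esub> \<in> jacobson (M2s R s)" using ring.J_neg[OF Tr AJ] by simp
    qed (rule o)
    have c3: "strongly_J_clean (M2s R s) A"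
      if "v \<in> carrier R" "v \<ominus>\<^bsub>R\<^esub> \<one>\<^bsub>R\<^esub> \<in> jacobson R" "w \<in> jacobson R"
        "similar (M2s R s) A (v, \<zero>\<^bsub>R\<^esub>, \<zero>\<^bsub>R\<^esub>, w)" for v w
      using L.diag_clean[OF that(1,2,3) Ac that(4)] .
    have c4: "strongly_J_clean (M2s R s) A"
      if "v \<in> carrier R" "v \<ominus>\<^bsub>R\<^esub> \<one>\<^bsub>R\<^esub> \<in> jacobson R" "w \<in> jacobson R"
        "similar (M2s R s) A (w, \<zero>\<^bsub>R\<^esub>, \<zero>\<^bsub>R\<^esub>, v)" for v w
      using L.diag_clean'[OF that(1,2,3) Ac that(4)] .
    show "strongly_J_clean (M2s R s) A"
      using H c1 c2 c3 c4 by blast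
  qed
qed


end
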